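(* Let $\lambda \in \mathrm{Char}(\mathcal{T}op)$. The unique twisted bialgebra morphism $\psi:\mathcal{T}op\longrightarrow \mathcal{C}omp$ such that $\varepsilon'\circ \psi=\lambda$ is given by the following: for any quasi-poset $T=(A,\leq_T)$, \[\psi(T)=\sum_{f\in L'(T)}\lambda(T_{\mid f^{-1}(1)})\ldots\lambda(T_{\mid f^{-1}(\max(f))})(f^{-1}(1),\ldots,f^{-1}(\max(f))).\]
   Context: $\mathcal{T}op[A]$ is the vector space generated by finite topologies on $A$, identified with quasi-posets $(A,\le_T)$ (open sets are upward-closed sets). It is a twisted bialgebra with product disjoint union and coproduct $\Delta_{A,B}(T)=T_{\mid A}\otimes T_{\mid B}$ if $B$ is an open set of $T$, $0$ otherwise. $\mathrm{Char}(\mathcal{T}op)$ is the set of twisted algebra morphisms $\mathcal{T}op\to\mathcal{C}om$ ($\mathcal{C}om[A]=\mathbb{K}$, product the multiplication of scalars). $\mathcal{C}omp[A]$ has basis the set compositions $(A_1,\ldots,A_k)$ of $A$, with quasi-shuffle product $\uplus$: $(A_1,\ldots,A_k)\uplus(A_{k+1},\ldots,A_{k+l})=\sum_{\sigma\in QSh(k,l)}(\bigcup_{\sigma(i)=1}A_i,\ldots,\bigcup_{\sigma(i)=\max\sigma}A_i)$, deconcatenation coproduct $\Delta_{A,B}(A_1,\ldots,A_k)=(A_1,\ldots,A_p)\otimes(A_{p+1},\ldots,A_k)$ if $A_1\sqcup\cdots\sqcup A_p=A$ (else $0$), and character $\varepsilon'(A_1,\ldots,A_k)=\delta_{k,1}$.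 For a quasi-poset $T=(A,\le_T)$, $L'(T)$ is the set of surjections $f:A\to\{1,\ldots,\max(f)\}$ such that $a\le_T b$ implies $f(a)\le f(b)$. *)

theory Defs
  imports Main
begin

text \<open>Finite quasi-posets T = (A, R): R is a reflexive, transitive relation on the
  finite set A; (a,b) in R means a \<le>_T b.  The basis of Top[A] consists of such R,
  so linear maps out of Top[A] are given by their values on these R.\<close>

definition quasi_order :: "'a set \<Rightarrow> ('a \<times> 'a) set \<Rightarrow> bool" where
  "quasi_order A R \<longleftrightarrow> R \<subseteq> A \<times> A \<and> refl_on A R \<and> trans R"

definition restr :: "('a \<times> 'a) set \<Rightarrow> 'a set \<Rightarrow> ('a \<times> 'a) set" where
  "restr R B = R \<inter> (B \<times> B)"

text \<open>Open sets of a topology = upward-closed sets of the quasi-order.\<close>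
definition is_open :: "('a \<times> 'a) set \<Rightarrow> 'a set \<Rightarrow> bool" where
  "is_open R C \<longleftrightarrow> (\<forall>a b. (a, b) \<in> R \<longrightarrow> a \<in> C \<longrightarrow> b \<in> C)"

text \<open>Transport of a quasi-order along a map (action of bijections in the species).\<close>
definition rel_image :: "('a \<Rightarrow> 'a) \<Rightarrow> ('a \<times> 'a) set \<Rightarrow> ('a \<times> 'a) set" where
  "rel_image \<sigma> R = (\<lambda>(x, y). (\<sigma> x, \<sigma> y)) ` R"

text \<open>Set compositions of A (basis of Comp[A]).  An element of Comp[A] is represented as
  a coefficient function on lists of sets, vanishing outside comps A.\<close>
definition comps :: "'a set \<Rightarrow> 'a set list set" where
  "comps A = {c. (\<forall>X\<in>set c. X \<noteq> {}) \<and>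
                 (\<forall>i<length c. \<forall>j<length c. i \<noteq> j \<longrightarrow> c ! i \<inter> c ! j = {}) \<and>
                 \<Union>(set c) = A}"

definition QSh :: "nat \<Rightarrow> nat \<Rightarrow> (nat \<Rightarrow> nat) set" where
  "QSh k l = {\<sigma>. (\<forall>i. i \<notin> {1..k+l} \<longrightarrow> \<sigma> i = 0) \<and> (\<exists>m. \<sigma> ` {1..k+l} = {1..m}) \<and>
                 strict_mono_on {1..k} \<sigma> \<and> strict_mono_on {k+1..k+l} \<sigma>}"

definition qsh_max :: "nat \<Rightarrow> (nat \<Rightarrow> nat) \<Rightarrow> nat" where
  "qsh_max n \<sigma> = Max (insert 0 (\<sigma> ` {1..n}))"

definition qsh_result :: "'a set list \<Rightarrow> 'a set list \<Rightarrow> (nat \<Rightarrow> nat) \<Rightarrow> 'a set list" where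
  "qsh_result c1 c2 \<sigma> =
     (let w = c1 @ c2; n = length w in
      map (\<lambda>j. \<Union>{w ! (i - 1) | i. i \<in> {1..n} \<and> \<sigma> i = j}) [1..<qsh_max n \<sigma> + 1])"

definition qsh_prod :: "'a set \<Rightarrow> 'a set \<Rightarrow> ('a set list \<Rightarrow> 'k::field) \<Rightarrow> ('a set list \<Rightarrow> 'k)
                         \<Rightarrow> 'a set list \<Rightarrow> 'k" where
  "qsh_prod A B u v c =
     (\<Sum>c1\<in>comps A. \<Sum>c2\<in>comps B. u c1 * v c2 *
        of_nat (card {\<sigma> \<in> QSh (length c1) (length c2). qsh_result c1 c2 \<sigma> = c}))"

text \<open>The character epsilon' of Comp: delta_{k,1} on nonempty sets; on Comp[{}] it is the
  counit (value 1 on the empty composition), as required for a character.\<close>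
definition eps_comp :: "'a set \<Rightarrow> ('a set list \<Rightarrow> 'k::field) \<Rightarrow> 'k" where
  "eps_comp A u = (\<Sum>c\<in>comps A. (if length c \<le> 1 then 1 else 0) * u c)"

definition top_character :: "('a set \<Rightarrow> ('a \<times> 'a) set \<Rightarrow> 'k::field) \<Rightarrow> bool" where
  "top_character lam \<longleftrightarrow>
     (\<forall>A B \<sigma> R. finite A \<longrightarrow> bij_betw \<sigma> A B \<longrightarrow> quasi_order A R \<longrightarrow>
         lam B (rel_image \<sigma> R) = lam A R) \<and>
     lam {} {} = 1 \<and>
     (\<forall>A B R S. finite A \<longrightarrow> finite B \<longrightarrow> A \<inter> B = {} \<longrightarrow> quasi_order A R \<longrightarrow> quasi_order B S \<longrightarrow>
         lam (A \<union> B) (R \<union> S) = lam A R * lam B S)"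

definition top_comp_morphism :: "('a set \<Rightarrow> ('a \<times> 'a) set \<Rightarrow> 'a set list \<Rightarrow> 'k::field) \<Rightarrow> bool" where
  "top_comp_morphism \<phi> \<longleftrightarrow>
     (\<forall>A R c. finite A \<longrightarrow> quasi_order A R \<longrightarrow> c \<notin> comps A \<longrightarrow> \<phi> A R c = 0) \<and>
     (\<forall>A B \<sigma> R c. finite A \<longrightarrow> bij_betw \<sigma> A B \<longrightarrow> quasi_order A R \<longrightarrow> c \<in> comps A \<longrightarrow>
         \<phi> B (rel_image \<sigma> R) (map ((`) \<sigma>) c) = \<phi> A R c) \<and>
     \<phi> {} {} = (\<lambda>c. if c = [] then 1 else 0) \<and>
     (\<forall>A B R S. finite A \<longrightarrow> finite B \<longrightarrow> A \<inter> B = {} \<longrightarrow> quasi_order A R \<longrightarrow> quasi_order B S \<longrightarrow>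
         \<phi> (A \<union> B) (R \<union> S) = qsh_prod A B (\<phi> A R) (\<phi> B S)) \<and>
     (\<forall>A B C R. finite A \<longrightarrow> quasi_order A R \<longrightarrow> B \<inter> C = {} \<longrightarrow> B \<union> C = A \<longrightarrow>
         (\<forall>c1\<in>comps B. \<forall>c2\<in>comps C.
            \<phi> A R (c1 @ c2) =
              (if is_open R C then \<phi> B (restr R B) c1 * \<phi> C (restr R C) c2 else 0))) \<and>
     \<phi> {} {} [] = 1"

definition Lp :: "'a set \<Rightarrow> ('a \<times> 'a) set \<Rightarrow> ('a \<Rightarrow> nat) set" where
  "Lp A R = {f. (\<forall>x. x \<notin> A \<longrightarrow> f x = 0) \<and> (\<exists>m. f ` A = {1..m}) \<and>
                (\<forall>a b. (a, b) \<in> R \<longrightarrow> f a \<le> f b)}"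

definition fmax :: "'a set \<Rightarrow> ('a \<Rightarrow> nat) \<Rightarrow> nat" where
  "fmax A f = Max (insert 0 (f ` A))"

definition fblock :: "'a set \<Rightarrow> ('a \<Rightarrow> nat) \<Rightarrow> nat \<Rightarrow> 'a set" where
  "fblock A f i = {x \<in> A. f x = i}"

definition fcomp :: "'a set \<Rightarrow> ('a \<Rightarrow> nat) \<Rightarrow> 'a set list" where
  "fcomp A f = map (fblock A f) [1..<fmax A f + 1]"

definition psi_formula :: "('a set \<Rightarrow> ('a \<times> 'a) set \<Rightarrow> 'k::field) \<Rightarrow> 'a set \<Rightarrow> ('a \<times> 'a) set
                            \<Rightarrow> 'a set list \<Rightarrow> 'k" where
  "psi_formula lam A R c =
     (\<Sum>f\<in>Lp A R. if c = fcomp A f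
        then (\<Prod>i\<in>{1..fmax A f}. lam (fblock A f i) (restr R (fblock A f i))) else 0)"

end

theory Submission
  imports Defs
begin

lemma comps_Nil[simp]: "([] \<in> comps A) = (A = {})"
  by (auto simp: comps_def)

lemma comps_Cons: "(X # xs \<in> comps A) = (X \<noteq> {} \<and> X \<subseteq> A \<and> xs \<in> comps (A - X))"
proof
  assume h: "X # xs \<in> comps A"
  have ne: "\<forall>Y\<in>set (X#xs). Y \<noteq> {}" and dj: "\<forall>i<length (X#xs). \<forall>j<length (X#xs). i \<noteq> j \<longrightarrow> (X#xs) ! i \<inter> (X#xs) ! j = {}"
    and un: "\<Union>(set (X#xs)) = A" using h by (auto simp: comps_def)
  have djx: "\<forall>Y\<in>set xs. X \<inter> Y = {}"
  proof
    fix Y assume "Y \<in> set xs"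
    then obtain i where "i < length xs" "xs ! i = Y" by (auto simp: in_set_conv_nth)
    with dj[rule_format, of 0 "Suc i"] show "X \<inter> Y = {}" by auto
  qed
  have "xs \<in> comps (A - X)" unfolding comps_def
  proof (intro CollectI conjI)
    show "\<forall>Y\<in>set xs. Y \<noteq> {}" using ne by auto
    show "\<forall>i<length xs. \<forall>j<length xs. i \<noteq> j \<longrightarrow> xs ! i \<inter> xs ! j = {}"
      using dj by (metis Suc_less_eq length_Cons nat.inject nth_Cons_Suc)
    show "\<Union> (set xs) = A - X" using un djx by auto
  qed
  then show "X \<noteq> {} \<and> X \<subseteq> A \<and> xs \<in> comps (A - X)" using ne un by auto
next
  assume h: "X \<noteq> {} \<and> X \<subseteq> A \<and> xs \<in> comps (A - X)"
  then have ne: "\<forall>Y\<in>set xs. Y \<noteq> {}" and dj: "\<forall>i<length xs. \<forall>j<length xs. i \<noteq> j \<longrightarrow> xs ! i \<inter> xs ! j = {}"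
    and un: "\<Union>(set xs) = A - X" by (auto simp: comps_def)
  show "X # xs \<in> comps A" unfolding comps_def
  proof (intro CollectI conjI)
    show "\<forall>Y\<in>set (X#xs). Y \<noteq> {}" using ne h by auto
    show "\<Union> (set (X#xs)) = A" using un h by auto
    show "\<forall>i<length (X#xs). \<forall>j<length (X#xs). i \<noteq> j \<longrightarrow> (X#xs) ! i \<inter> (X#xs) ! j = {}"
    proof (intro allI impI)
      fix i j assume ij: "i < length (X#xs)" "j < length (X#xs)" "i \<noteq> j"
      show "(X#xs) ! i \<inter> (X#xs) ! j = {}"
      proof (cases i)
        case 0
        then obtain j' where "j = Suc j'" "j' < length xs" using ij by (cases j) auto
        then have "xs ! j' \<subseteq> A - X" using un nth_mem by blast
        then show ?thesis using 0 \<open>j = Suc j'\<close> by auto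
      next
        case (Suc i')
        show ?thesis
        proof (cases j)
          case 0
          have "xs ! i' \<subseteq> A - X" using un nth_mem Suc ij by (metis Sup_upper length_Cons Suc_less_eq)
          then show ?thesis using 0 Suc by auto
        next
          case (Suc j')
          then show ?thesis using dj ij \<open>i = Suc i'\<close> by auto
        qed
      qed
    qed
  qed
qed

lemma comps_append: "c1 \<in> comps A \<Longrightarrow> c2 \<in> comps B \<Longrightarrow> A \<inter> B = {} \<Longrightarrow> c1 @ c2 \<in> comps (A \<union> B)"
proof (induction c1 arbitrary: A)
  case Nil then show ?case by simp
next
  case (Cons X c1)
  then have "X \<noteq> {}" "X \<subseteq> A" "c1 \<in> comps (A - X)" by (auto simp: comps_Cons)
  moreover have "A \<union> B - X = (A - X) \<union> B" using Cons.prems \<open>X \<subseteq> A\<close> by auto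
  ultimately show ?case using Cons.IH[of "A - X"] Cons.prems by (auto simp: comps_Cons)
qed

lemma comps_sub: "c \<in> comps A \<Longrightarrow> X \<in> set c \<Longrightarrow> X \<subseteq> A"
  by (auto simp: comps_def)

lemma comps_ne: "c \<in> comps A \<Longrightarrow> X \<in> set c \<Longrightarrow> X \<noteq> {}"
  by (auto simp: comps_def)

lemma comps_distinct: "c \<in> comps A \<Longrightarrow> distinct c"
  unfolding comps_def distinct_conv_nth by (metis (mono_tags, lifting) inf.idem mem_Collect_eq nth_mem)

lemma finite_comps: "finite A \<Longrightarrow> finite (comps A)"
proof -
  assume "finite A"
  then have "finite {xs. set xs \<subseteq> Pow A \<and> distinct xs}" by (intro finite_subset_distinct) auto
  moreover have "comps A \<subseteq> {xs. set xs \<subseteq> Pow A \<and> distinct xs}"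
    using comps_distinct comps_sub by fastforce
  ultimately show ?thesis using finite_subset by blast
qed

lemma comps_disj: "c \<in> comps A \<Longrightarrow> i < length c \<Longrightarrow> j < length c \<Longrightarrow> x \<in> c ! i \<Longrightarrow> x \<in> c ! j \<Longrightarrow> i = j"
  by (auto simp: comps_def)

lemma comps_cover: "c \<in> comps A \<Longrightarrow> x \<in> A \<Longrightarrow> \<exists>i<length c. x \<in> c ! i"
  by (auto simp: comps_def in_set_conv_nth)

definition monoc :: "('a \<times> 'a) set \<Rightarrow> 'a set list \<Rightarrow> bool" where
  "monoc R c \<longleftrightarrow> (\<forall>i<length c. \<forall>j<length c. \<forall>a\<in>c!i. \<forall>b\<in>c!j. (a,b)\<in>R \<longrightarrow> i \<le> j)"

definition CF :: "('a set \<Rightarrow> ('a \<times> 'a) set \<Rightarrow> 'k::field) \<Rightarrow> 'a set \<Rightarrow> ('a \<times> 'a) set \<Rightarrow> 'a set list \<Rightarrow> 'k" where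
  "CF lam A R c = (if c \<in> comps A \<and> monoc R c then prod_list (map (\<lambda>X. lam X (restr R X)) c) else 0)"

lemma monoc_Nil[simp]: "monoc R []" by (simp add: monoc_def)

lemma monoc_Cons[simp]: "monoc R (X # xs) = (monoc R xs \<and> (\<forall>a\<in>\<Union>(set xs). \<forall>b\<in>X. (a,b) \<notin> R))"
proof
  assume h: "monoc R (X # xs)"
  have "monoc R xs" unfolding monoc_def
  proof (intro allI impI ballI)
    fix i j a b assume "i < length xs" "j < length xs" "a \<in> xs ! i" "b \<in> xs ! j" "(a,b) \<in> R"
    then show "i \<le> j" using h[unfolded monoc_def, rule_format, of "Suc i" "Suc j" a b] by auto
  qed
  moreover have "\<forall>a\<in>\<Union>(set xs). \<forall>b\<in>X. (a,b) \<notin> R"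
  proof (intro ballI notI)
    fix a b assume "a \<in> \<Union>(set xs)" "b \<in> X" "(a,b) \<in> R"
    then obtain i where "i < length xs" "a \<in> xs ! i" by (auto simp: in_set_conv_nth)
    then show False using h[unfolded monoc_def, rule_format, of "Suc i" 0 a b] \<open>b \<in> X\<close> \<open>(a,b) \<in> R\<close> by auto
  qed
  ultimately show "monoc R xs \<and> (\<forall>a\<in>\<Union>(set xs). \<forall>b\<in>X. (a,b) \<notin> R)" by blast
next
  assume h: "monoc R xs \<and> (\<forall>a\<in>\<Union>(set xs). \<forall>b\<in>X. (a,b) \<notin> R)"
  show "monoc R (X # xs)" unfolding monoc_def
  proof (intro allI impI ballI)
    fix i j a b assume ij: "i < length (X#xs)" "j < length (X#xs)" "a \<in> (X#xs) ! i" "b \<in> (X#xs) ! j" "(a,b) \<in> R"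
    show "i \<le> j"
    proof (cases i)
      case 0 then show ?thesis by simp
    next
      case (Suc i')
      show ?thesis
      proof (cases j)
        case 0
        have "a \<in> \<Union>(set xs)" using ij Suc by auto
        then show ?thesis using h ij 0 by auto
      next
        case (Suc j')
        then show ?thesis using h ij \<open>i = Suc i'\<close> unfolding monoc_def by auto
      qed
    qed
  qed
qed

lemma monoc_append: "monoc R (c1 @ c2) = (monoc R c1 \<and> monoc R c2 \<and> (\<forall>a\<in>\<Union>(set c2). \<forall>b\<in>\<Union>(set c1). (a,b) \<notin> R))"
proof (induction c1)
  case (Cons X c1)
  show ?case by (simp add: Cons.IH) blast
qed simp

lemma monoc_restr: "\<Union>(set c) \<subseteq> D \<Longrightarrow> monoc (restr R D) c = monoc R c"
proof (induction c)
  case (Cons X c)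
  then have "X \<subseteq> D" "\<Union>(set c) \<subseteq> D" by auto
  then show ?case using Cons.IH unfolding monoc_Cons restr_def by blast
qed simp

lemma restr_restr: "X \<subseteq> D \<Longrightarrow> restr (restr R D) X = restr R X"
  by (auto simp: restr_def)

lemma qo_restr: "quasi_order A R \<Longrightarrow> Y \<subseteq> A \<Longrightarrow> quasi_order Y (restr R Y)"
  unfolding quasi_order_def restr_def refl_on_def trans_def by blast

lemma qo_empty: "quasi_order {} R \<Longrightarrow> R = {}"
  unfolding quasi_order_def by auto

lemma restr_full: "quasi_order A R \<Longrightarrow> restr R A = R"
  unfolding quasi_order_def restr_def by auto

lemma topchar_empty: "top_character lam \<Longrightarrow> lam {} {} = 1"
  by (simp add: top_character_def)

lemma restr_empty[simp]: "restr R {} = {}" by (simp add: restr_def)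

lemma CF_coprod:
  assumes qo: "quasi_order A R" and BC: "B \<inter> C = {}" "B \<union> C = A"
    and c1: "c1 \<in> comps B" and c2: "c2 \<in> comps C"
  shows "CF lam A R (c1 @ c2) = (if is_open R C then CF lam B (restr R B) c1 * CF lam C (restr R C) c2 else 0)"
proof -
  have app: "c1 @ c2 \<in> comps A" using comps_append[OF c1 c2 BC(1)] BC by simp
  have u1: "\<Union>(set c1) = B" and u2: "\<Union>(set c2) = C" using c1 c2 by (auto simp: comps_def)
  have RA: "R \<subseteq> A \<times> A" using qo by (simp add: quasi_order_def)
  have op: "is_open R C = (\<forall>a\<in>C. \<forall>b\<in>B. (a,b) \<notin> R)"
    unfolding is_open_def using RA BC by blast
  have mono: "monoc R (c1 @ c2) = (is_open R C \<and> monoc (restr R B) c1 \<and> monoc (restr R C) c2)"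
    unfolding monoc_append op using monoc_restr[of c1 B R] monoc_restr[of c2 C R] u1 u2 by auto
  have p1: "map (\<lambda>X. lam X (restr R X)) c1 = map (\<lambda>X. lam X (restr (restr R B) X)) c1"
    by (intro map_cong refl) (simp add: restr_restr comps_sub[OF c1])
  have p2: "map (\<lambda>X. lam X (restr R X)) c2 = map (\<lambda>X. lam X (restr (restr R C) X)) c2"
    by (intro map_cong refl) (simp add: restr_restr comps_sub[OF c2])
  show ?thesis unfolding CF_def map_append prod_list.append p1 p2 using app mono c1 c2 by simp
qed

lemma CF_single:
  assumes qo: "quasi_order X R" and ne: "X \<noteq> {}"
  shows "CF lam X R [X] = lam X R"
  using ne restr_full[OF qo] by (simp add: CF_def comps_Cons)

lemma CF_empty: "CF lam {} {} = (\<lambda>c. if c = [] then (1::'k::field) else 0)"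
proof
  fix c :: "'a set list"
  show "CF lam {} {} c = (if c = [] then 1 else 0)"
  proof (cases c)
    case Nil then show ?thesis by (simp add: CF_def)
  next
    case (Cons X xs) then show ?thesis by (auto simp: CF_def comps_Cons)
  qed
qed

lemma eps_single:
  assumes fin: "finite X" and ne: "X \<noteq> {}"
  shows "eps_comp X u = u [X]"
proof -
  have "\<And>c. c \<in> comps X \<Longrightarrow> (if length c \<le> 1 then 1 else 0) * u c = (if c = [X] then u [X] else 0)"
  proof -
    fix c assume c: "c \<in> comps X"
    show "(if length c \<le> 1 then 1 else 0) * u c = (if c = [X] then u [X] else 0)"
    proof (cases c)
      case Nil then show ?thesis using c ne by simp
    next
      case (Cons Y ys)
      then show ?thesis using c by (cases ys) (auto simp: comps_Cons)
    qed
  qed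
  then have "eps_comp X u = (\<Sum>c\<in>comps X. if c = [X] then u [X] else 0)"
    unfolding eps_comp_def by (rule sum.cong[OF refl])
  also have "\<dots> = u [X]" using finite_comps[OF fin] ne by (simp add: comps_Cons)
  finally show ?thesis .
qed

lemma eps_empty: fixes u :: "'a set list \<Rightarrow> 'k::field" shows "eps_comp {} u = u []"
proof -
  have "c \<in> comps {} \<longleftrightarrow> c = []" for c :: "'a set list" by (cases c) (auto simp: comps_Cons)
  then have "comps {} = {[]::'a set list}" by auto
  then show ?thesis unfolding eps_comp_def by simp
qed

lemma CF_eps:
  assumes tc: "top_character lam" and fin: "finite A" and qo: "quasi_order A R"
  shows "eps_comp A (CF lam A R) = lam A R"
proof (cases "A = {}")
  case True
  then have "R = {}" using qo qo_empty by blast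
  then show ?thesis using True eps_empty CF_empty topchar_empty[OF tc] by metis
next
  case False
  then show ?thesis by (simp add: eps_single[OF fin False] CF_single[OF qo False])
qed

lemma max_upto: "Max (insert 0 {1..m::nat}) = m"
  by (cases m) (auto intro!: Max_eqI)

lemma fcomp_props:
  assumes f0: "\<forall>x. x \<notin> A \<longrightarrow> f x = 0" and img: "f ` A = {1..m}"
  shows "fmax A f = m" "length (fcomp A f) = m" "\<forall>j<m. fcomp A f ! j = {x\<in>A. f x = Suc j}"
    "fcomp A f \<in> comps A"
proof -
  show fm: "fmax A f = m" unfolding fmax_def img by (rule max_upto)
  show len: "length (fcomp A f) = m" unfolding fcomp_def fm by simp
  show nth: "\<forall>j<m. fcomp A f ! j = {x\<in>A. f x = Suc j}"
    unfolding fcomp_def fm fblock_def by (auto simp: nth_append)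
  show "fcomp A f \<in> comps A" unfolding comps_def
  proof (intro CollectI conjI)
    show "\<forall>X\<in>set (fcomp A f). X \<noteq> {}"
    proof
      fix X assume "X \<in> set (fcomp A f)"
      then obtain j where j: "j < m" "X = fcomp A f ! j" using len by (auto simp: in_set_conv_nth)
      then have "Suc j \<in> f ` A" using img by auto
      then show "X \<noteq> {}" using j nth by auto
    qed
    show "\<forall>i<length (fcomp A f). \<forall>j<length (fcomp A f). i \<noteq> j \<longrightarrow> fcomp A f ! i \<inter> fcomp A f ! j = {}"
      using nth len by auto
    show "\<Union> (set (fcomp A f)) = A"
    proof
      show "\<Union> (set (fcomp A f)) \<subseteq> A" using nth len by (auto simp: in_set_conv_nth)
      show "A \<subseteq> \<Union> (set (fcomp A f))"
      proof
        fix x assume x: "x \<in> A"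
        then have "f x \<in> {1..m}" using img by auto
        then have "f x - 1 < m" "x \<in> fcomp A f ! (f x - 1)" using nth x by auto
        then show "x \<in> \<Union> (set (fcomp A f))" using len by (metis UnionI nth_mem)
      qed
    qed
  qed
qed

lemma Lp_D: "f \<in> Lp A R \<Longrightarrow> \<exists>m. (\<forall>x. x \<notin> A \<longrightarrow> f x = 0) \<and> f ` A = {1..m} \<and> (\<forall>a b. (a,b) \<in> R \<longrightarrow> f a \<le> f b)"
  by (auto simp: Lp_def)

lemma finite_Lp: assumes fin: "finite A" shows "finite (Lp A R)"
proof -
  have "Lp A R \<subseteq> {f. \<forall>x. (x \<in> A \<longrightarrow> f x \<in> {0..card A}) \<and> (x \<notin> A \<longrightarrow> f x = 0)}"
  proof
    fix f assume "f \<in> Lp A R"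
    then obtain m where f0: "\<forall>x. x \<notin> A \<longrightarrow> f x = 0" and img: "f ` A = {1..m}" using Lp_D by blast
    have "m = card (f ` A)" using img by simp
    also have "\<dots> \<le> card A" using fin by (rule card_image_le)
    finally have mc: "m \<le> card A" .
    have "f x \<in> {1..m}" if "x \<in> A" for x using img that by blast
    then have "\<forall>x\<in>A. f x \<le> card A" using mc by (meson atLeastAtMost_iff le_trans)
    then show "f \<in> {f. \<forall>x. (x \<in> A \<longrightarrow> f x \<in> {0..card A}) \<and> (x \<notin> A \<longrightarrow> f x = 0)}" using f0 by auto
  qed
  moreover have "finite {f. \<forall>x. (x \<in> A \<longrightarrow> f x \<in> {0..card A}) \<and> (x \<notin> A \<longrightarrow> f x = (0::nat))}"
    by (rule finite_set_of_finite_funs) (use fin in auto)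
  ultimately show ?thesis by (rule finite_subset)
qed

lemma idx_the: "c \<in> comps A \<Longrightarrow> j < length c \<Longrightarrow> x \<in> c ! j \<Longrightarrow> (THE j. j < length c \<and> x \<in> c ! j) = j"
  by (rule the_equality) (auto dest: comps_disj)

lemma Lp_claim1:
  assumes f: "f \<in> Lp A R"
  shows "fcomp A f \<in> comps A \<and> monoc R (fcomp A f) \<and>
    (\<Prod>i\<in>{1..fmax A f}. lam (fblock A f i) (restr R (fblock A f i))) = prod_list (map (\<lambda>X. lam X (restr R X)) (fcomp A f))"
proof -
  obtain m where f0: "\<forall>x. x \<notin> A \<longrightarrow> f x = 0" and img: "f ` A = {1..m}" and mo: "\<forall>a b. (a,b) \<in> R \<longrightarrow> f a \<le> f b"
    using Lp_D[OF f] by blast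
  note P = fcomp_props[OF f0 img]
  have "monoc R (fcomp A f)" unfolding monoc_def
  proof (intro allI impI ballI)
    fix i j a b assume "i < length (fcomp A f)" "j < length (fcomp A f)" "a \<in> fcomp A f ! i" "b \<in> fcomp A f ! j" "(a,b) \<in> R"
    then show "i \<le> j" using P mo by fastforce
  qed
  moreover have "(\<Prod>i\<in>{1..fmax A f}. lam (fblock A f i) (restr R (fblock A f i))) = prod_list (map (\<lambda>X. lam X (restr R X)) (fcomp A f))"
  proof -
    have "prod_list (map (\<lambda>X. lam X (restr R X)) (fcomp A f)) = prod_list (map (\<lambda>i. lam (fblock A f i) (restr R (fblock A f i))) [1..<fmax A f + 1])"
      unfolding fcomp_def by (simp add: comp_def)
    also have "\<dots> = (\<Prod>i\<in>set [1..<fmax A f + 1]. lam (fblock A f i) (restr R (fblock A f i)))"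
      by (rule prod.distinct_set_conv_list[symmetric]) simp
    also have "set [1..<fmax A f + 1] = {1..fmax A f}" by auto
    finally show ?thesis by simp
  qed
  ultimately show ?thesis using P by blast
qed

lemma Lp_claim2:
  assumes f: "f \<in> Lp A R" and g: "g \<in> Lp A R" and eq: "fcomp A f = fcomp A g"
  shows "f = g"
proof
  fix x
  obtain m where f0: "\<forall>x. x \<notin> A \<longrightarrow> f x = 0" and img: "f ` A = {1..m}" using Lp_D[OF f] by blast
  obtain m' where g0: "\<forall>x. x \<notin> A \<longrightarrow> g x = 0" and img': "g ` A = {1..m'}" using Lp_D[OF g] by blast
  note P = fcomp_props[OF f0 img] and Q = fcomp_props[OF g0 img']
  have mm: "m = m'" using P(2) Q(2) eq by simp
  show "f x = g x"
  proof (cases "x \<in> A")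
    case False then show ?thesis using f0 g0 by simp
  next
    case True
    have fx: "f x \<in> {1..m}" "g x \<in> {1..m}" using True img img' mm by auto
    have "x \<in> fcomp A f ! (f x - 1)" using P(3) fx True by auto
    moreover have "x \<in> fcomp A f ! (g x - 1)" using Q(3) fx True eq mm by auto
    ultimately have "f x - 1 = g x - 1" using comps_disj[OF P(4)] P(2) fx by force
    moreover have "f x \<ge> 1" "g x \<ge> 1" using fx by auto
    ultimately show ?thesis by linarith
  qed
qed

lemma Lp_claim3:
  assumes c: "c \<in> comps A" and mo: "monoc R c" and qo: "quasi_order A R"
  shows "\<exists>f\<in>Lp A R. fcomp A f = c"
proof -
  define f where "f x = (if x \<in> A then Suc (THE j. j < length c \<and> x \<in> c ! j) else 0)" for x
  have fj: "f x = Suc j" if "j < length c" "x \<in> c ! j" for x j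
  proof -
    have "x \<in> A" using that comps_sub[OF c] nth_mem by blast
    then show ?thesis using idx_the[OF c that] by (simp add: f_def)
  qed
  have ex: "\<exists>j<length c. x \<in> c ! j" if "x \<in> A" for x using comps_cover[OF c that] .
  have f0: "\<forall>x. x \<notin> A \<longrightarrow> f x = 0" by (simp add: f_def)
  have sub: "c ! i \<subseteq> A" if "i < length c" for i using comps_sub[OF c] nth_mem that by blast
  have img: "f ` A = {1..length c}"
  proof
    show "f ` A \<subseteq> {1..length c}"
    proof
      fix y assume "y \<in> f ` A"
      then obtain x where x: "x \<in> A" "y = f x" by blast
      then obtain j where "j < length c" "x \<in> c ! j" using ex by blast
      then show "y \<in> {1..length c}" using fj x by auto
    qed
    show "{1..length c} \<subseteq> f ` A"
    proof
      fix k assume k: "k \<in> {1..length c}"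
      then have k1: "k - 1 < length c" by auto
      then have "c ! (k - 1) \<noteq> {}" using comps_ne[OF c] nth_mem by blast
      then obtain x where x: "x \<in> c ! (k - 1)" by blast
      then have "f x = k" using fj[OF k1 x] k by auto
      moreover have "x \<in> A" using x sub[OF k1] by blast
      ultimately show "k \<in> f ` A" by blast
    qed
  qed
  have RA: "R \<subseteq> A \<times> A" using qo by (simp add: quasi_order_def)
  have fmo: "\<forall>a b. (a,b) \<in> R \<longrightarrow> f a \<le> f b"
  proof (intro allI impI)
    fix a b assume ab: "(a,b) \<in> R"
    then obtain i j where "i < length c" "a \<in> c ! i" "j < length c" "b \<in> c ! j" using ex RA by blast
    then show "f a \<le> f b" using mo ab fj unfolding monoc_def by auto
  qed
  have fL: "f \<in> Lp A R" unfolding Lp_def using f0 img fmo by blast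
  note P = fcomp_props[OF f0 img]
  have "fcomp A f = c"
  proof (rule nth_equalityI)
    show "length (fcomp A f) = length c" using P by simp
    fix j assume "j < length (fcomp A f)"
    then have j: "j < length c" using P by simp
    show "fcomp A f ! j = c ! j"
    proof
      show "fcomp A f ! j \<subseteq> c ! j"
      proof
        fix x assume "x \<in> fcomp A f ! j"
        then have x: "x \<in> A" "f x = Suc j" using P(3) j by auto
        then obtain i where "i < length c" "x \<in> c ! i" using ex by blast
        then show "x \<in> c ! j" using fj x by auto
      qed
      show "c ! j \<subseteq> fcomp A f ! j"
      proof
        fix x assume x: "x \<in> c ! j"
        then have "x \<in> A" "f x = Suc j" using sub[OF j] fj[OF j x] by auto
        then show "x \<in> fcomp A f ! j" using P(3) j by auto
      qed
    qed
  qed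
  then show ?thesis using fL by blast
qed

lemma psi_CF:
  assumes fin: "finite A" and qo: "quasi_order A R"
  shows "psi_formula lam A R = CF lam A R"
proof
  fix c
  define P where "P f = (\<Prod>i\<in>{1..fmax A f}. lam (fblock A f i) (restr R (fblock A f i)))" for f
  have pf: "psi_formula lam A R c = (\<Sum>f\<in>Lp A R. if c = fcomp A f then P f else 0)"
    unfolding psi_formula_def P_def by (rule refl)
  show "psi_formula lam A R c = CF lam A R c"
  proof (cases "c \<in> comps A \<and> monoc R c")
    case True
    then obtain f0 where f0: "f0 \<in> Lp A R" "fcomp A f0 = c" using Lp_claim3 qo by blast
    have "(\<Sum>f\<in>Lp A R. if c = fcomp A f then P f else 0) = (\<Sum>f\<in>Lp A R. if f = f0 then P f0 else 0)"
    proof (rule sum.cong[OF refl])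
      fix f assume f: "f \<in> Lp A R"
      have "c = fcomp A f \<longleftrightarrow> f = f0"
      proof
        assume "c = fcomp A f"
        then have "fcomp A f = fcomp A f0" using f0(2) by simp
        then show "f = f0" by (rule Lp_claim2[OF f f0(1)])
      next
        assume "f = f0" then show "c = fcomp A f" using f0(2) by simp
      qed
      then show "(if c = fcomp A f then P f else 0) = (if f = f0 then P f0 else 0)" by simp
    qed
    also have "\<dots> = P f0" using finite_Lp[OF fin, of R] f0(1) by simp
    also have "\<dots> = prod_list (map (\<lambda>X. lam X (restr R X)) c)"
      using Lp_claim1[OF f0(1), of lam] f0(2) unfolding P_def by simp
    also have "\<dots> = CF lam A R c" using True unfolding CF_def by simp
    finally show ?thesis using pf by simp
  next
    case False
    have "(\<Sum>f\<in>Lp A R. if c = fcomp A f then P f else 0) = (\<Sum>f\<in>Lp A R. 0)"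
    proof (rule sum.cong[OF refl])
      fix f assume f: "f \<in> Lp A R"
      have "c \<noteq> fcomp A f" using Lp_claim1[OF f, of lam] False by blast
      then show "(if c = fcomp A f then P f else 0) = 0" by simp
    qed
    moreover have "CF lam A R c = 0" unfolding CF_def using False by (rule if_not_P)
    ultimately show ?thesis using pf by simp
  qed
qed

lemma rel_image_mem:
  assumes inj: "inj_on \<sigma> A" and RA: "R \<subseteq> A \<times> A" and a: "a \<in> A" and b: "b \<in> A"
  shows "((\<sigma> a, \<sigma> b) \<in> rel_image \<sigma> R) = ((a,b) \<in> R)"
proof
  assume "(\<sigma> a, \<sigma> b) \<in> rel_image \<sigma> R"
  then obtain a' b' where ab: "(a',b') \<in> R" "\<sigma> a = \<sigma> a'" "\<sigma> b = \<sigma> b'" unfolding rel_image_def by auto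
  then have "a' \<in> A" "b' \<in> A" using RA by auto
  then have "a = a'" "b = b'" using ab inj a b unfolding inj_on_def by auto
  then show "(a,b) \<in> R" using ab by simp
next
  assume "(a,b) \<in> R" then show "(\<sigma> a, \<sigma> b) \<in> rel_image \<sigma> R" unfolding rel_image_def by auto
qed

lemma CF_equiv:
  assumes tc: "top_character lam" and fin: "finite A" and bij: "bij_betw \<sigma> A B"
    and qo: "quasi_order A R" and c: "c \<in> comps A"
  shows "CF lam B (rel_image \<sigma> R) (map ((`) \<sigma>) c) = CF lam A R c"
proof -
  have inj: "inj_on \<sigma> A" and BA: "\<sigma> ` A = B" using bij by (auto simp: bij_betw_def)
  have RA: "R \<subseteq> A \<times> A" using qo by (simp add: quasi_order_def)
  have sub: "\<And>i. i < length c \<Longrightarrow> c ! i \<subseteq> A" using comps_sub[OF c] nth_mem by blast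
  have mc: "map ((`) \<sigma>) c \<in> comps B" unfolding comps_def
  proof (intro CollectI conjI)
    show "\<forall>X\<in>set (map ((`) \<sigma>) c). X \<noteq> {}" using comps_ne[OF c] by auto
    show "\<forall>i<length (map ((`) \<sigma>) c). \<forall>j<length (map ((`) \<sigma>) c). i \<noteq> j \<longrightarrow> map ((`) \<sigma>) c ! i \<inter> map ((`) \<sigma>) c ! j = {}"
    proof (intro allI impI)
      fix i j assume ij: "i < length (map ((`) \<sigma>) c)" "j < length (map ((`) \<sigma>) c)" "i \<noteq> j"
      have "\<sigma> ` (c ! i) \<inter> \<sigma> ` (c ! j) = \<sigma> ` (c ! i \<inter> c ! j)"
        using inj_on_image_Int[OF inj sub sub] ij by simp
      also have "c ! i \<inter> c ! j = {}" using c ij by (auto simp: comps_def)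
      finally show "map ((`) \<sigma>) c ! i \<inter> map ((`) \<sigma>) c ! j = {}" using ij by simp
    qed
    show "\<Union> (set (map ((`) \<sigma>) c)) = B" using c BA by (auto simp: comps_def)
  qed
  have key: "(\<forall>a\<in>\<sigma>`(c!i). \<forall>b\<in>\<sigma>`(c!j). (a,b)\<in>rel_image \<sigma> R \<longrightarrow> i \<le> j) = (\<forall>a\<in>c!i. \<forall>b\<in>c!j. (a,b)\<in>R \<longrightarrow> i \<le> j)"
    if ij: "i < length c" "j < length c" for i j
  proof -
    have "(\<forall>a\<in>\<sigma>`(c!i). \<forall>b\<in>\<sigma>`(c!j). (a,b)\<in>rel_image \<sigma> R \<longrightarrow> i \<le> j) =
          (\<forall>a\<in>c!i. \<forall>b\<in>c!j. (\<sigma> a,\<sigma> b)\<in>rel_image \<sigma> R \<longrightarrow> i \<le> j)" by blast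
    also have "\<dots> = (\<forall>a\<in>c!i. \<forall>b\<in>c!j. (a,b)\<in>R \<longrightarrow> i \<le> j)"
    proof (intro ball_cong refl)
      fix a b assume "a \<in> c ! i" "b \<in> c ! j"
      then have "a \<in> A" "b \<in> A" using sub ij by auto
      then show "((\<sigma> a,\<sigma> b)\<in>rel_image \<sigma> R \<longrightarrow> i \<le> j) = ((a,b)\<in>R \<longrightarrow> i \<le> j)"
        using rel_image_mem[OF inj RA] by simp
    qed
    finally show ?thesis .
  qed
  have mono: "monoc (rel_image \<sigma> R) (map ((`) \<sigma>) c) = monoc R c"
  proof
    assume H: "monoc (rel_image \<sigma> R) (map ((`) \<sigma>) c)"
    show "monoc R c" unfolding monoc_def
    proof (intro allI impI)
      fix i j assume ij: "i < length c" "j < length c"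
      then have "\<forall>a\<in>\<sigma>`(c!i). \<forall>b\<in>\<sigma>`(c!j). (a,b)\<in>rel_image \<sigma> R \<longrightarrow> i \<le> j"
        using H unfolding monoc_def by simp
      then show "\<forall>a\<in>c!i. \<forall>b\<in>c!j. (a,b)\<in>R \<longrightarrow> i \<le> j" using key[OF ij] by blast
    qed
  next
    assume H: "monoc R c"
    show "monoc (rel_image \<sigma> R) (map ((`) \<sigma>) c)" unfolding monoc_def length_map
    proof (intro allI impI)
      fix i j assume ij: "i < length c" "j < length c"
      then have "\<forall>a\<in>c!i. \<forall>b\<in>c!j. (a,b)\<in>R \<longrightarrow> i \<le> j"
        using H unfolding monoc_def by simp
      then have "\<forall>a\<in>\<sigma>`(c!i). \<forall>b\<in>\<sigma>`(c!j). (a,b)\<in>rel_image \<sigma> R \<longrightarrow> i \<le> j" using key[OF ij] by blast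
      then show "\<forall>a\<in>map ((`) \<sigma>) c ! i. \<forall>b\<in>map ((`) \<sigma>) c ! j. (a, b) \<in> rel_image \<sigma> R \<longrightarrow> i \<le> j"
        using ij by simp
    qed
  qed
  have pr: "map (\<lambda>X. lam X (restr (rel_image \<sigma> R) X)) (map ((`) \<sigma>) c) = map (\<lambda>X. lam X (restr R X)) c"
  proof -
    have "lam (\<sigma> ` X) (restr (rel_image \<sigma> R) (\<sigma> ` X)) = lam X (restr R X)" if X: "X \<in> set c" for X
    proof -
      have XA: "X \<subseteq> A" using comps_sub[OF c X] .
      have "restr (rel_image \<sigma> R) (\<sigma> ` X) = rel_image \<sigma> (restr R X)"
      proof
        show "restr (rel_image \<sigma> R) (\<sigma> ` X) \<subseteq> rel_image \<sigma> (restr R X)"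
        proof
          fix p assume "p \<in> restr (rel_image \<sigma> R) (\<sigma> ` X)"
          then have pa: "p \<in> (\<lambda>(x, y). (\<sigma> x, \<sigma> y)) ` R" and pb: "p \<in> \<sigma> ` X \<times> \<sigma> ` X"
            unfolding restr_def rel_image_def by auto
          from pa obtain q where q: "q \<in> R" "p = (\<lambda>(x, y). (\<sigma> x, \<sigma> y)) q" by (rule imageE)
          obtain a b where "q = (a,b)" by (cases q)
          then have p0: "p = (\<sigma> a, \<sigma> b)" "(a,b) \<in> R" "p \<in> \<sigma> ` X \<times> \<sigma> ` X" using q pb by auto
          then have p: "p = (\<sigma> a, \<sigma> b)" "(a,b) \<in> R" "\<sigma> a \<in> \<sigma> ` X" "\<sigma> b \<in> \<sigma> ` X" by auto
          then have "a \<in> A" "b \<in> A" using RA by auto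
          then have "a \<in> X" "b \<in> X" using p(3,4) inj_on_image_mem_iff[OF inj _ XA] by auto
          then show "p \<in> rel_image \<sigma> (restr R X)" using p unfolding restr_def rel_image_def by auto
        qed
        show "rel_image \<sigma> (restr R X) \<subseteq> restr (rel_image \<sigma> R) (\<sigma> ` X)"
          unfolding restr_def rel_image_def by auto
      qed
      moreover have "lam (\<sigma> ` X) (rel_image \<sigma> (restr R X)) = lam X (restr R X)"
      proof -
        have inv: "\<forall>A B \<sigma> R. finite A \<longrightarrow> bij_betw \<sigma> A B \<longrightarrow> quasi_order A R \<longrightarrow> lam B (rel_image \<sigma> R) = lam A R"
          using tc unfolding top_character_def by (rule conjunct1)
        have "bij_betw \<sigma> X (\<sigma> ` X)" using inj_on_subset[OF inj XA] by (simp add: bij_betw_def)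
        then show ?thesis using inv[rule_format, OF finite_subset[OF XA fin] _ qo_restr[OF qo XA]] by blast
      qed
      ultimately show ?thesis by simp
    qed
    then show ?thesis by simp
  qed
  show ?thesis unfolding CF_def pr using mc mono c by simp
qed

definition proj :: "'a set \<Rightarrow> 'a set list \<Rightarrow> 'a set list" where
  "proj A c = filter (\<lambda>X. X \<noteq> {}) (map (\<lambda>X. X \<inter> A) c)"

lemma proj_Nil[simp]: "proj A [] = []" by (simp add: proj_def)

lemma proj_Cons: "proj A (X # xs) = (if X \<inter> A \<noteq> {} then (X \<inter> A) # proj A xs else proj A xs)"
  by (simp add: proj_def)

lemma proj_comps: "c \<in> comps U \<Longrightarrow> proj A c \<in> comps (U \<inter> A)"
proof (induction c arbitrary: U)
  case Nil then show ?case by simp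
next
  case (Cons X xs)
  then have X: "X \<noteq> {}" "X \<subseteq> U" and xs: "xs \<in> comps (U - X)" by (auto simp: comps_Cons)
  have IH: "proj A xs \<in> comps ((U - X) \<inter> A)" using Cons.IH[OF xs] .
  show ?case
  proof (cases "X \<inter> A \<noteq> {}")
    case True
    have "U \<inter> A - X \<inter> A = (U - X) \<inter> A" by blast
    then show ?thesis using True X IH by (auto simp: proj_Cons comps_Cons)
  next
    case False
    then have "(U - X) \<inter> A = U \<inter> A" by blast
    then show ?thesis using False IH by (simp add: proj_Cons)
  qed
qed

lemma Union_proj: "\<Union>(set (proj A c)) = \<Union>(set c) \<inter> A"
  by (induction c) (auto simp: proj_Cons)

lemma monoc_proj_Cons:
  assumes RA: "R \<subseteq> A \<times> A"
  shows "monoc R (proj A (X # xs)) = (monoc R (proj A xs) \<and> (\<forall>a\<in>\<Union>(set xs). \<forall>b\<in>X. (a,b) \<notin> R))"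
proof (cases "X \<inter> A \<noteq> {}")
  case True
  have "(\<forall>a\<in>\<Union>(set xs) \<inter> A. \<forall>b\<in>X \<inter> A. (a,b) \<notin> R) = (\<forall>a\<in>\<Union>(set xs). \<forall>b\<in>X. (a,b) \<notin> R)"
    using RA by blast
  then show ?thesis using True by (simp add: proj_Cons Union_proj)
next
  case False
  then have "(\<forall>a\<in>\<Union>(set xs). \<forall>b\<in>X. (a,b) \<notin> R)" using RA by blast
  then show ?thesis using False by (simp add: proj_Cons)
qed

lemma monoc_union_proj:
  assumes RA: "R \<subseteq> A \<times> A" and SB: "S \<subseteq> B \<times> B"
  shows "monoc (R \<union> S) c = (monoc R (proj A c) \<and> monoc S (proj B c))"
proof (induction c)
  case Nil then show ?case by simp
next
  case (Cons X xs)
  show ?case unfolding monoc_Cons monoc_proj_Cons[OF RA] monoc_proj_Cons[OF SB] Cons.IH by blast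
qed

lemma prod_proj_Cons:
  assumes "F {} = (1::'k::comm_monoid_mult)"
  shows "prod_list (map F (proj A (X # xs))) = F (X \<inter> A) * prod_list (map F (proj A xs))"
  using assms by (simp add: proj_Cons)

lemma tc_mult:
  assumes tc: "top_character lam" and "finite A" "finite B" "A \<inter> B = {}" "quasi_order A R" "quasi_order B S"
  shows "lam (A \<union> B) (R \<union> S) = lam A R * lam B S"
proof -
  have "\<forall>A B R S. finite A \<longrightarrow> finite B \<longrightarrow> A \<inter> B = {} \<longrightarrow> quasi_order A R \<longrightarrow> quasi_order B S \<longrightarrow>
         lam (A \<union> B) (R \<union> S) = lam A R * lam B S"
    using tc unfolding top_character_def by (elim conjE)
  then show ?thesis using assms(2-6) by blast
qed

lemma prod_proj:
  assumes tc: "top_character lam" and qoA: "quasi_order A R" and qoB: "quasi_order B S" and AB: "A \<inter> B = {}"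
  shows "c \<in> comps U \<Longrightarrow> U \<subseteq> A \<union> B \<Longrightarrow> finite U \<Longrightarrow>
    prod_list (map (\<lambda>X. lam X (restr (R \<union> S) X)) c) =
    prod_list (map (\<lambda>X. lam X (restr R X)) (proj A c)) * prod_list (map (\<lambda>X. lam X (restr S X)) (proj B c))"
proof (induction c arbitrary: U)
  case Nil then show ?case by simp
next
  case (Cons X xs)
  then have X: "X \<subseteq> U" and xs: "xs \<in> comps (U - X)" by (auto simp: comps_Cons)
  have IH: "prod_list (map (\<lambda>X. lam X (restr (R \<union> S) X)) xs) =
    prod_list (map (\<lambda>X. lam X (restr R X)) (proj A xs)) * prod_list (map (\<lambda>X. lam X (restr S X)) (proj B xs))"
    using Cons.IH[OF xs] Cons.prems by auto
  have RA: "R \<subseteq> A \<times> A" and SB: "S \<subseteq> B \<times> B" using qoA qoB by (auto simp: quasi_order_def)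
  have l1: "lam {} (restr R {}) = 1" "lam {} (restr S {}) = 1" using topchar_empty[OF tc] by auto
  have Xe: "X = (X \<inter> A) \<union> (X \<inter> B)" using X Cons.prems by blast
  have re: "restr (R \<union> S) X = restr R (X \<inter> A) \<union> restr S (X \<inter> B)"
    using RA SB Xe unfolding restr_def by blast
  have fX: "finite X" using X Cons.prems finite_subset by blast
  have lx: "lam X (restr (R \<union> S) X) = lam (X \<inter> A) (restr R (X \<inter> A)) * lam (X \<inter> B) (restr S (X \<inter> B))"
  proof -
    have "lam X (restr (R \<union> S) X) = lam ((X \<inter> A) \<union> (X \<inter> B)) (restr R (X \<inter> A) \<union> restr S (X \<inter> B))"
      using Xe re by simp
    also have "\<dots> = lam (X \<inter> A) (restr R (X \<inter> A)) * lam (X \<inter> B) (restr S (X \<inter> B))"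
      by (rule tc_mult[OF tc]) (use fX AB qo_restr[OF qoA] qo_restr[OF qoB] in auto)
    finally show ?thesis .
  qed
  show ?case
    unfolding prod_proj_Cons[where F="\<lambda>X. lam X (restr R X)", OF l1(1)]
      prod_proj_Cons[where F="\<lambda>X. lam X (restr S X)", OF l1(2)]
    using lx IH by (simp add: mult_ac)
qed

lemma CF_proj:
  assumes tc: "top_character lam" and fA: "finite A" and fB: "finite B" and AB: "A \<inter> B = {}"
    and qoA: "quasi_order A R" and qoB: "quasi_order B S" and c: "c \<in> comps (A \<union> B)"
  shows "CF lam (A \<union> B) (R \<union> S) c = CF lam A R (proj A c) * CF lam B S (proj B c)"
proof -
  have RA: "R \<subseteq> A \<times> A" and SB: "S \<subseteq> B \<times> B" using qoA qoB by (auto simp: quasi_order_def)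
  have pA: "proj A c \<in> comps A" using proj_comps[OF c, of A] by (simp add: Int_absorb1)
  have pB: "proj B c \<in> comps B" using proj_comps[OF c, of B] by (simp add: Int_absorb1)
  have pp: "prod_list (map (\<lambda>X. lam X (restr (R \<union> S) X)) c) =
    prod_list (map (\<lambda>X. lam X (restr R X)) (proj A c)) * prod_list (map (\<lambda>X. lam X (restr S X)) (proj B c))"
    using prod_proj[OF tc qoA qoB AB c] fA fB by auto
  show ?thesis unfolding CF_def using c pA pB pp monoc_union_proj[OF RA SB, of c] by simp
qed

lemma qsh_basic:
  assumes "\<sigma> \<in> QSh k l"
  shows "\<exists>m. \<sigma> ` {1..k+l} = {1..m} \<and> qsh_max (k+l) \<sigma> = m \<and> (\<forall>i. i \<notin> {1..k+l} \<longrightarrow> \<sigma> i = 0) \<and>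
    strict_mono_on {1..k} \<sigma> \<and> strict_mono_on {k+1..k+l} \<sigma>"
proof -
  obtain m where m: "\<sigma> ` {1..k+l} = {1..m}" using assms by (auto simp: QSh_def)
  have "qsh_max (k+l) \<sigma> = m" unfolding qsh_max_def m by (rule max_upto)
  then show ?thesis using m assms by (auto simp: QSh_def)
qed

lemma qsh_result_nth:
  assumes "qsh_max (length c1 + length c2) \<sigma> = m"
  shows "length (qsh_result c1 c2 \<sigma>) = m"
    "\<And>j. j < m \<Longrightarrow> qsh_result c1 c2 \<sigma> ! j = \<Union>{(c1@c2)!(i-1) | i. i \<in> {1..length c1 + length c2} \<and> \<sigma> i = Suc j}"
proof -
  show "length (qsh_result c1 c2 \<sigma>) = m" using assms by (simp add: qsh_result_def Let_def)
  fix j assume "j < m"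
  then have "[1..<qsh_max (length c1 + length c2) \<sigma> + 1] ! j = Suc j"
    using assms nth_upt[of 1 j "m+1"] by (simp del: upt_Suc)
  then show "qsh_result c1 c2 \<sigma> ! j = \<Union>{(c1@c2)!(i-1) | i. i \<in> {1..length c1 + length c2} \<and> \<sigma> i = Suc j}"
    using assms \<open>j < m\<close> unfolding qsh_result_def Let_def by (simp del: upt_Suc)
qed

lemma filter_blocks:
  fixes q p m :: nat
  assumes sm: "strict_mono_on {q+1..q+p} \<sigma>" and img: "\<sigma> ` {q+1..q+p} \<subseteq> {1..m}" and len: "length d = p"
    and ne: "\<forall>X\<in>set d. X \<noteq> {}"
    and g: "\<forall>j<m. g j = \<Union>{d!(i-q-1) | i. i \<in> {q+1..q+p} \<and> \<sigma> i = Suc j}"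
  shows "filter (\<lambda>X. X \<noteq> {}) (map g [0..<m]) = d"
proof -
  let ?I = "{q+1..q+p}"
  have inj: "inj_on \<sigma> ?I" using sm by (rule strict_mono_on_imp_inj_on)
  have sI: "1 \<le> \<sigma> i \<and> \<sigma> i \<le> m" if "i \<in> ?I" for i using subsetD[OF img imageI[OF that]] by simp
  have gs: "g (\<sigma> i - 1) = d ! (i - q - 1)" if i: "i \<in> ?I" for i
  proof -
    have lt: "\<sigma> i - 1 < m" and su: "Suc (\<sigma> i - 1) = \<sigma> i" using sI[OF i] by auto
    have "{d!(i'-q-1) | i'. i' \<in> ?I \<and> \<sigma> i' = Suc (\<sigma> i - 1)} = {d!(i-q-1)}"
    proof -
      have iff: "i' \<in> ?I \<and> \<sigma> i' = \<sigma> i \<longleftrightarrow> i' = i" for i' using inj i unfolding inj_on_def by blast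
      show ?thesis unfolding su
      proof (rule set_eqI)
        fix x
        show "x \<in> {d!(i'-q-1) | i'. i' \<in> ?I \<and> \<sigma> i' = \<sigma> i} \<longleftrightarrow> x \<in> {d!(i-q-1)}"
        proof
          assume "x \<in> {d!(i'-q-1) | i'. i' \<in> ?I \<and> \<sigma> i' = \<sigma> i}"
          then obtain i' where "x = d!(i'-q-1)" "i' \<in> ?I \<and> \<sigma> i' = \<sigma> i" by blast
          then show "x \<in> {d!(i-q-1)}" using iff by simp
        next
          assume "x \<in> {d!(i-q-1)}"
          then show "x \<in> {d!(i'-q-1) | i'. i' \<in> ?I \<and> \<sigma> i' = \<sigma> i}" using i by blast
        qed
      qed
    qed
    then show ?thesis using g lt by simp
  qed
  have gne: "g j \<noteq> {} \<longleftrightarrow> Suc j \<in> \<sigma> ` ?I" if j: "j < m" for j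
  proof
    assume "g j \<noteq> {}"
    then have "{d!(i-q-1) | i. i \<in> ?I \<and> \<sigma> i = Suc j} \<noteq> {}" using g j by auto
    then show "Suc j \<in> \<sigma> ` ?I" by force
  next
    assume "Suc j \<in> \<sigma> ` ?I"
    then obtain i where i: "i \<in> ?I" "\<sigma> i = Suc j" by auto
    then have "g j = d ! (i - q - 1)" using gs[OF i(1)] by simp
    moreover have "i - q - 1 < length d" using i(1) len by auto
    ultimately show "g j \<noteq> {}" using ne nth_mem by metis
  qed
  let ?h = "\<lambda>i. \<sigma> i - 1"
  have setL: "set [q+1..<q+p+1] = ?I" by (simp only: set_upt) auto
  have fl: "filter (\<lambda>j. g j \<noteq> {}) [0..<m] = map ?h [q+1..<q+p+1]"
  proof (rule sorted_distinct_set_unique)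
    have "sorted_wrt (<) (filter (\<lambda>j. g j \<noteq> {}) [0..<m])" by (rule sorted_wrt_filter) simp
    then show "sorted (filter (\<lambda>j. g j \<noteq> {}) [0..<m])" "distinct (filter (\<lambda>j. g j \<noteq> {}) [0..<m])"
      by (auto simp: strict_sorted_iff)
    have key: "map ?h [q+1..<q+p+1] ! a < map ?h [q+1..<q+p+1] ! b"
      if ab: "a < b" "b < length (map ?h [q+1..<q+p+1])" for a b
    proof -
      have ab': "a < p" "b < p" using ab by (simp_all del: upt_Suc)
      have mm: "map ?h [q+1..<q+p+1] ! a = ?h ([q+1..<q+p+1] ! a)" "map ?h [q+1..<q+p+1] ! b = ?h ([q+1..<q+p+1] ! b)"
        using ab' by (simp_all del: upt_Suc)
      have "q + 1 + a \<in> ?I" "q + 1 + b \<in> ?I" "q + 1 + a < q + 1 + b" using ab' ab(1) by auto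
      then have "\<sigma> (q+1+a) < \<sigma> (q+1+b)" "1 \<le> \<sigma> (q+1+a)" using sm sI unfolding strict_mono_on_def by auto
      moreover have "[q+1..<q+p+1] ! a = q+1+a" "[q+1..<q+p+1] ! b = q+1+b" using ab' by (simp_all del: upt_Suc)
      ultimately show ?thesis unfolding mm by simp
    qed
    have "sorted_wrt (<) (map ?h [q+1..<q+p+1])"
      unfolding sorted_wrt_iff_nth_less using key by blast
    then show "sorted (map ?h [q+1..<q+p+1])" "distinct (map ?h [q+1..<q+p+1])"
      by (auto simp: strict_sorted_iff)
    show "set (filter (\<lambda>j. g j \<noteq> {}) [0..<m]) = set (map ?h [q+1..<q+p+1])"
    proof
      show "set (filter (\<lambda>j. g j \<noteq> {}) [0..<m]) \<subseteq> set (map ?h [q+1..<q+p+1])"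
      proof
        fix j assume "j \<in> set (filter (\<lambda>j. g j \<noteq> {}) [0..<m])"
        then have j: "j < m" "g j \<noteq> {}" by simp_all
        then have "Suc j \<in> \<sigma> ` ?I" using gne[OF j(1)] by simp
        then obtain i where i: "i \<in> ?I" "\<sigma> i = Suc j" by (rule imageE) simp
        then have "j = ?h i" by simp
        then show "j \<in> set (map ?h [q+1..<q+p+1])" unfolding set_map setL using i(1) by (rule image_eqI)
      qed
      show "set (map ?h [q+1..<q+p+1]) \<subseteq> set (filter (\<lambda>j. g j \<noteq> {}) [0..<m])"
      proof
        fix j assume "j \<in> set (map ?h [q+1..<q+p+1])"
        then obtain i where i: "i \<in> ?I" "j = \<sigma> i - 1" unfolding set_map setL by blast
        then have jm: "j < m" "Suc j = \<sigma> i" using sI[OF i(1)] by auto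
        then have "Suc j \<in> \<sigma> ` ?I" using i(1) by (metis imageI)
        then have "g j \<noteq> {}" using gne[OF jm(1)] by simp
        then show "j \<in> set (filter (\<lambda>j. g j \<noteq> {}) [0..<m])" using jm(1) by simp
      qed
    qed
  qed
  have "filter (\<lambda>X. X \<noteq> {}) (map g [0..<m]) = map g (filter (\<lambda>j. g j \<noteq> {}) [0..<m])"
    by (simp del: upt_Suc add: filter_map comp_def)
  also have "\<dots> = map g (map ?h [q+1..<q+p+1])" by (simp only: fl)
  also have "\<dots> = map (\<lambda>i. g (\<sigma> i - 1)) [q+1..<q+p+1]" by (simp only: map_map comp_def)
  also have "\<dots> = map (\<lambda>i. d ! (i - q - 1)) [q+1..<q+p+1]"
  proof (rule map_cong[OF refl])
    fix i assume "i \<in> set [q+1..<q+p+1]"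
    then have "i \<in> ?I" unfolding setL .
    then show "g (\<sigma> i - 1) = d ! (i - q - 1)" by (rule gs)
  qed
  also have "\<dots> = d"
  proof (rule nth_equalityI)
    show "length (map (\<lambda>i. d ! (i - q - 1)) [q+1..<q+p+1]) = length d" using len by (simp del: upt_Suc)
    fix t assume "t < length (map (\<lambda>i. d ! (i - q - 1)) [q+1..<q+p+1])"
    then have t: "t < p" by (simp del: upt_Suc)
    then have "[q+1..<q+p+1] ! t = q + 1 + t" by (simp del: upt_Suc)
    then show "map (\<lambda>i. d ! (i - q - 1)) [q+1..<q+p+1] ! t = d ! t" using t by (simp del: upt_Suc)
  qed
  finally show ?thesis .
qed

lemma mem_UN_compr: "x \<in> \<Union>{f i | i. P i} \<longleftrightarrow> (\<exists>i. P i \<and> x \<in> f i)"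
  by blast

lemma qsh_win:
  assumes \<sigma>: "\<sigma> \<in> QSh (length c1) (length c2)" and i: "i \<in> {1..length c1 + length c2}"
  shows "1 \<le> \<sigma> i \<and> \<sigma> i - 1 < length (qsh_result c1 c2 \<sigma>) \<and> (c1 @ c2) ! (i - 1) \<subseteq> qsh_result c1 c2 \<sigma> ! (\<sigma> i - 1)"
proof -
  obtain m where img: "\<sigma> ` {1..length c1 + length c2} = {1..m}" and qm: "qsh_max (length c1 + length c2) \<sigma> = m"
    using qsh_basic[OF \<sigma>] by blast
  have si: "\<sigma> i \<in> {1..m}" using img i by blast
  then have j: "\<sigma> i - 1 < m" and sj: "Suc (\<sigma> i - 1) = \<sigma> i" by auto
  have "qsh_result c1 c2 \<sigma> ! (\<sigma> i - 1) = \<Union>{(c1@c2)!(i'-1) | i'. i' \<in> {1..length c1 + length c2} \<and> \<sigma> i' = Suc (\<sigma> i - 1)}"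
    using qsh_result_nth(2)[OF qm j] .
  also have "\<dots> = \<Union>{(c1@c2)!(i'-1) | i'. i' \<in> {1..length c1 + length c2} \<and> \<sigma> i' = \<sigma> i}" unfolding sj ..
  finally have "(c1 @ c2) ! (i - 1) \<subseteq> qsh_result c1 c2 \<sigma> ! (\<sigma> i - 1)" using i by blast
  then show ?thesis using si j qsh_result_nth(1)[OF qm] by simp
qed

lemma qsh_R1:
  assumes c1: "c1 \<in> comps A" and c2: "c2 \<in> comps B" and AB: "A \<inter> B = {}"
    and \<sigma>: "\<sigma> \<in> QSh (length c1) (length c2)"
  shows "qsh_result c1 c2 \<sigma> \<in> comps (A \<union> B) \<and> proj A (qsh_result c1 c2 \<sigma>) = c1 \<and> proj B (qsh_result c1 c2 \<sigma>) = c2"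
proof -
  define k where "k = length c1"
  define l where "l = length c2"
  define n where "n = k + l"
  define w where "w = c1 @ c2"
  define c where "c = qsh_result c1 c2 \<sigma>"
  obtain m where img: "\<sigma> ` {1..n} = {1..m}" and qm: "qsh_max (length c1 + length c2) \<sigma> = m"
    and sm1: "strict_mono_on {1..k} \<sigma>" and sm2: "strict_mono_on {k+1..k+l} \<sigma>"
    using qsh_basic[OF \<sigma>] unfolding n_def k_def l_def by blast
  have lc: "length c = m" unfolding c_def by (rule qsh_result_nth(1)[OF qm])
  have cn: "c ! j = \<Union>{w!(i-1) | i. i \<in> {1..n} \<and> \<sigma> i = Suc j}" if "j < m" for j
    unfolding c_def w_def n_def k_def l_def using qsh_result_nth(2)[OF qm that] .
  have cn': "x \<in> c ! j \<longleftrightarrow> (\<exists>i. i \<in> {1..n} \<and> \<sigma> i = Suc j \<and> x \<in> w ! (i-1))" if "j < m" for j x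
    unfolding cn[OF that] mem_UN_compr by blast
  have wc: "w \<in> comps (A \<union> B)" unfolding w_def using comps_append[OF c1 c2 AB] .
  have lw: "length w = n" unfolding w_def n_def k_def l_def by simp
  have w1: "w ! (i-1) = c1 ! (i-1)" if "i \<in> {1..k}" for i
    using that unfolding w_def k_def by (auto simp: nth_append)
  have w2: "w ! (i-1) = c2 ! (i-k-1)" if "i \<in> {k+1..n}" for i
  proof -
    have "\<not> i - 1 < k" "i - 1 - k = i - k - 1" using that by auto
    then show ?thesis unfolding w_def k_def by (simp add: nth_append)
  qed
  have wA: "w ! (i-1) \<subseteq> A" if "i \<in> {1..k}" for i
  proof -
    have "i - 1 < length c1" using that k_def by auto
    then show ?thesis using w1[OF that] comps_sub[OF c1] nth_mem by metis
  qed
  have wB: "w ! (i-1) \<subseteq> B" if "i \<in> {k+1..n}" for i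
  proof -
    have "i - k - 1 < length c2" using that l_def n_def by auto
    then show ?thesis using w2[OF that] comps_sub[OF c2] nth_mem by metis
  qed
  have wne: "w ! (i-1) \<noteq> {}" if "i \<in> {1..n}" for i
  proof -
    have "i - 1 < length w" using that lw by auto
    then show ?thesis using comps_ne[OF wc] nth_mem by metis
  qed
  have win: "1 \<le> \<sigma> i \<and> \<sigma> i - 1 < m \<and> w ! (i-1) \<subseteq> c ! (\<sigma> i - 1)" if "i \<in> {1..n}" for i
    using qsh_win[OF \<sigma>, of i] that lc unfolding c_def w_def n_def k_def l_def by simp
  have cc: "c \<in> comps (A \<union> B)" unfolding comps_def
  proof (intro CollectI conjI)
    show "\<forall>X\<in>set c. X \<noteq> {}"
    proof
      fix X assume "X \<in> set c"
      then obtain j where j: "j < m" "X = c ! j" using lc by (auto simp: in_set_conv_nth)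
      then have "Suc j \<in> \<sigma> ` {1..n}" using img by auto
      then obtain i where i: "i \<in> {1..n}" "\<sigma> i = Suc j" by (metis imageE)
      then have "w ! (i-1) \<subseteq> X" using win[OF i(1)] j by simp
      then show "X \<noteq> {}" using wne[OF i(1)] by blast
    qed
    show "\<forall>i<length c. \<forall>j<length c. i \<noteq> j \<longrightarrow> c ! i \<inter> c ! j = {}"
    proof (intro allI impI)
      fix i j assume ij: "i < length c" "j < length c" "i \<noteq> j"
      show "c ! i \<inter> c ! j = {}"
      proof (rule ccontr)
        assume "c ! i \<inter> c ! j \<noteq> {}"
        then obtain x where x: "x \<in> c ! i" "x \<in> c ! j" by blast
        obtain a where a: "a \<in> {1..n}" "\<sigma> a = Suc i" "x \<in> w ! (a-1)" using cn'[of i x] x(1) ij lc by auto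
        obtain b where b: "b \<in> {1..n}" "\<sigma> b = Suc j" "x \<in> w ! (b-1)" using cn'[of j x] x(2) ij lc by auto
        have "a - 1 = b - 1" using comps_disj[OF wc _ _ a(3) b(3)] a(1) b(1) lw by auto
        then have "a = b" using a(1) b(1) by auto
        then show False using a(2) b(2) ij(3) by simp
      qed
    qed
    show "\<Union>(set c) = A \<union> B"
    proof
      show "\<Union>(set c) \<subseteq> A \<union> B"
      proof
        fix x assume "x \<in> \<Union>(set c)"
        then obtain j where j: "j < m" "x \<in> c ! j" using lc by (auto simp: in_set_conv_nth)
        then obtain a where a: "a \<in> {1..n}" "x \<in> w ! (a-1)" using cn' by blast
        have "a - 1 < length w" using a(1) lw by auto
        then show "x \<in> A \<union> B" using a(2) comps_sub[OF wc] nth_mem by blast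
      qed
      show "A \<union> B \<subseteq> \<Union>(set c)"
      proof
        fix x assume "x \<in> A \<union> B"
        then obtain t where t: "t < length w" "x \<in> w ! t" using comps_cover[OF wc] by blast
        have i: "Suc t \<in> {1..n}" using t lw by auto
        then have "x \<in> c ! (\<sigma> (Suc t) - 1)" "\<sigma> (Suc t) - 1 < length c" using win[OF i] t lc by auto
        then show "x \<in> \<Union>(set c)" using nth_mem by blast
      qed
    qed
  qed
  have mapc: "map (\<lambda>X. X \<inter> D) c = map (\<lambda>j. c ! j \<inter> D) [0..<m]" for D
    by (rule nth_equalityI) (simp_all add: lc)
  have pA: "proj A c = c1"
  proof -
    have g: "\<forall>j<m. c ! j \<inter> A = \<Union>{c1!(i-0-1) | i. i \<in> {0+1..0+k} \<and> \<sigma> i = Suc j}"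
    proof (intro allI impI)
      fix j assume j: "j < m"
      show "c ! j \<inter> A = \<Union>{c1!(i-0-1) | i. i \<in> {0+1..0+k} \<and> \<sigma> i = Suc j}"
      proof (rule set_eqI)
        fix x
        show "x \<in> c ! j \<inter> A \<longleftrightarrow> x \<in> \<Union>{c1!(i-0-1) | i. i \<in> {0+1..0+k} \<and> \<sigma> i = Suc j}"
          unfolding mem_UN_compr
        proof
          assume x: "x \<in> c ! j \<inter> A"
          then obtain a where a: "a \<in> {1..n}" "\<sigma> a = Suc j" "x \<in> w ! (a-1)" using cn'[OF j] by blast
          show "\<exists>i. (i \<in> {0+1..0+k} \<and> \<sigma> i = Suc j) \<and> x \<in> c1 ! (i-0-1)"
          proof (cases "a \<le> k")
            case True
            then have "a \<in> {1..k}" using a(1) by auto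
            then show ?thesis using a w1 by auto
          next
            case False
            then have "a \<in> {k+1..n}" using a(1) by auto
            then have "x \<in> B" using wB a(3) by blast
            then show ?thesis using x AB by blast
          qed
        next
          assume "\<exists>i. (i \<in> {0+1..0+k} \<and> \<sigma> i = Suc j) \<and> x \<in> c1 ! (i-0-1)"
          then obtain i where i: "i \<in> {1..k}" "\<sigma> i = Suc j" "x \<in> c1 ! (i-1)" by auto
          then have "x \<in> w ! (i-1)" "x \<in> A" using w1 wA by auto
          moreover have "i \<in> {1..n}" using i(1) n_def by auto
          ultimately show "x \<in> c ! j \<inter> A" using cn'[OF j] i(2) by blast
        qed
      qed
    qed
    have "filter (\<lambda>X. X \<noteq> {}) (map (\<lambda>j. c ! j \<inter> A) [0..<m]) = c1"
    proof (rule filter_blocks[where q=0 and p=k and \<sigma>=\<sigma>])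
      show "strict_mono_on {0+1..0+k} \<sigma>" using sm1 by simp
      show "\<sigma> ` {0+1..0+k} \<subseteq> {1..m}" using img n_def by auto
      show "length c1 = k" by (simp add: k_def)
      show "\<forall>X\<in>set c1. X \<noteq> {}" using comps_ne[OF c1] by blast
      show "\<forall>j<m. c ! j \<inter> A = \<Union>{c1!(i-0-1) | i. i \<in> {0+1..0+k} \<and> \<sigma> i = Suc j}" by (rule g)
    qed
    then show ?thesis unfolding proj_def mapc .
  qed
  have pB: "proj B c = c2"
  proof -
    have g: "\<forall>j<m. c ! j \<inter> B = \<Union>{c2!(i-k-1) | i. i \<in> {k+1..k+l} \<and> \<sigma> i = Suc j}"
    proof (intro allI impI)
      fix j assume j: "j < m"
      show "c ! j \<inter> B = \<Union>{c2!(i-k-1) | i. i \<in> {k+1..k+l} \<and> \<sigma> i = Suc j}"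
      proof (rule set_eqI)
        fix x
        show "x \<in> c ! j \<inter> B \<longleftrightarrow> x \<in> \<Union>{c2!(i-k-1) | i. i \<in> {k+1..k+l} \<and> \<sigma> i = Suc j}"
          unfolding mem_UN_compr
        proof
          assume x: "x \<in> c ! j \<inter> B"
          then obtain a where a: "a \<in> {1..n}" "\<sigma> a = Suc j" "x \<in> w ! (a-1)" using cn'[OF j] by blast
          show "\<exists>i. (i \<in> {k+1..k+l} \<and> \<sigma> i = Suc j) \<and> x \<in> c2 ! (i-k-1)"
          proof (cases "a \<le> k")
            case False
            then have "a \<in> {k+1..n}" using a(1) by auto
            then show ?thesis using a w2 n_def by auto
          next
            case True
            then have "a \<in> {1..k}" using a(1) by auto
            then have "x \<in> A" using wA a(3) by blast
            then show ?thesis using x AB by blast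
          qed
        next
          assume "\<exists>i. (i \<in> {k+1..k+l} \<and> \<sigma> i = Suc j) \<and> x \<in> c2 ! (i-k-1)"
          then obtain i where i: "i \<in> {k+1..n}" "\<sigma> i = Suc j" "x \<in> c2 ! (i-k-1)" using n_def by auto
          then have "x \<in> w ! (i-1)" "x \<in> B" using w2 wB by auto
          moreover have "i \<in> {1..n}" using i(1) n_def by auto
          ultimately show "x \<in> c ! j \<inter> B" using cn'[OF j] i(2) by blast
        qed
      qed
    qed
    have "filter (\<lambda>X. X \<noteq> {}) (map (\<lambda>j. c ! j \<inter> B) [0..<m]) = c2"
    proof (rule filter_blocks[where q=k and p=l and \<sigma>=\<sigma>])
      show "strict_mono_on {k+1..k+l} \<sigma>" using sm2 by simp
      show "\<sigma> ` {k+1..k+l} \<subseteq> {1..m}" using img n_def by auto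
      show "length c2 = l" by (simp add: l_def)
      show "\<forall>X\<in>set c2. X \<noteq> {}" using comps_ne[OF c2] by blast
      show "\<forall>j<m. c ! j \<inter> B = \<Union>{c2!(i-k-1) | i. i \<in> {k+1..k+l} \<and> \<sigma> i = Suc j}" by (rule g)
    qed
    then show ?thesis unfolding proj_def mapc .
  qed
  show ?thesis using cc pA pB unfolding c_def by blast
qed

lemma qsh_unique:
  assumes c1: "c1 \<in> comps A" and c2: "c2 \<in> comps B" and AB: "A \<inter> B = {}"
    and \<sigma>: "\<sigma> \<in> QSh (length c1) (length c2)" and \<tau>: "\<tau> \<in> QSh (length c1) (length c2)"
    and eq: "qsh_result c1 c2 \<sigma> = qsh_result c1 c2 \<tau>"
  shows "\<sigma> = \<tau>"
proof
  fix i
  define c where "c = qsh_result c1 c2 \<sigma>"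
  have cc: "c \<in> comps (A \<union> B)" using qsh_R1[OF c1 c2 AB \<sigma>] unfolding c_def by blast
  have wc: "c1 @ c2 \<in> comps (A \<union> B)" using comps_append[OF c1 c2 AB] .
  show "\<sigma> i = \<tau> i"
  proof (cases "i \<in> {1..length c1 + length c2}")
    case False
    then show ?thesis using \<sigma> \<tau> unfolding QSh_def by auto
  next
    case True
    have s: "1 \<le> \<sigma> i" "\<sigma> i - 1 < length c" "(c1 @ c2) ! (i - 1) \<subseteq> c ! (\<sigma> i - 1)"
      using qsh_win[OF \<sigma> True] unfolding c_def by auto
    have t: "1 \<le> \<tau> i" "\<tau> i - 1 < length c" "(c1 @ c2) ! (i - 1) \<subseteq> c ! (\<tau> i - 1)"
      using qsh_win[OF \<tau> True] unfolding c_def eq by auto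
    have "i - 1 < length (c1 @ c2)" using True by auto
    then have "(c1 @ c2) ! (i - 1) \<noteq> {}" using comps_ne[OF wc] nth_mem by metis
    then obtain x where "x \<in> (c1 @ c2) ! (i - 1)" by blast
    then have "\<sigma> i - 1 = \<tau> i - 1" using comps_disj[OF cc s(2) t(2)] s(3) t(3) by blast
    then show ?thesis using s(1) t(1) by linarith
  qed
qed

lemma qsh_exists:
  assumes c: "c \<in> comps (A \<union> B)" and AB: "A \<inter> B = {}"
  shows "\<exists>\<sigma>\<in>QSh (length (proj A c)) (length (proj B c)). qsh_result (proj A c) (proj B c) \<sigma> = c"
proof -
  define m where "m = length c"
  define JA where "JA = filter (\<lambda>j. c ! j \<inter> A \<noteq> {}) [0..<m]"
  define JB where "JB = filter (\<lambda>j. c ! j \<inter> B \<noteq> {}) [0..<m]"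
  have mapc: "map (\<lambda>X. X \<inter> D) c = map (\<lambda>j. c ! j \<inter> D) [0..<m]" for D
    by (rule nth_equalityI) (simp_all add: m_def)
  have pA: "proj A c = map (\<lambda>j. c ! j \<inter> A) JA"
    unfolding proj_def mapc JA_def by (simp add: filter_map comp_def)
  have pB: "proj B c = map (\<lambda>j. c ! j \<inter> B) JB"
    unfolding proj_def mapc JB_def by (simp add: filter_map comp_def)
  define k where "k = length JA"
  define l where "l = length JB"
  have lk: "length (proj A c) = k" "length (proj B c) = l" unfolding pA pB k_def l_def by simp_all
  have sA: "sorted_wrt (<) JA" unfolding JA_def by (rule sorted_wrt_filter) simp
  have sB: "sorted_wrt (<) JB" unfolding JB_def by (rule sorted_wrt_filter) simp
  have setA: "set JA = {j. j < m \<and> c ! j \<inter> A \<noteq> {}}" unfolding JA_def by auto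
  have setB: "set JB = {j. j < m \<and> c ! j \<inter> B \<noteq> {}}" unfolding JB_def by auto
  have JAt: "JA ! t < m \<and> c ! (JA ! t) \<inter> A \<noteq> {}" if "t < k" for t
    using nth_mem[of t JA] that setA k_def by auto
  have JBt: "JB ! t < m \<and> c ! (JB ! t) \<inter> B \<noteq> {}" if "t < l" for t
    using nth_mem[of t JB] that setB l_def by auto
  define \<sigma> where "\<sigma> i = (if 1 \<le> i \<and> i \<le> k then Suc (JA ! (i-1)) else if k < i \<and> i \<le> k + l then Suc (JB ! (i-k-1)) else 0)" for i
  have s1: "\<sigma> i = Suc (JA ! (i-1))" if "i \<in> {1..k}" for i using that by (simp add: \<sigma>_def)
  have s2: "\<sigma> i = Suc (JB ! (i-k-1))" if "i \<in> {k+1..k+l}" for i using that by (simp add: \<sigma>_def)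
  have img: "\<sigma> ` {1..k+l} = {1..m}"
  proof
    show "\<sigma> ` {1..k+l} \<subseteq> {1..m}"
    proof
      fix y assume "y \<in> \<sigma> ` {1..k+l}"
      then obtain i where i: "i \<in> {1..k+l}" "y = \<sigma> i" by blast
      show "y \<in> {1..m}"
      proof (cases "i \<le> k")
        case True
        then have ii: "i \<in> {1..k}" using i by auto
        then have "i - 1 < k" by auto
        then have "JA ! (i-1) < m" using JAt by blast
        then show ?thesis using s1[OF ii] i(2) by simp
      next
        case False
        then have ii: "i \<in> {k+1..k+l}" using i by auto
        then have "i - k - 1 < l" by auto
        then have "JB ! (i-k-1) < m" using JBt by blast
        then show ?thesis using s2[OF ii] i(2) by simp
      qed
    qed
    show "{1..m} \<subseteq> \<sigma> ` {1..k+l}"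
    proof
      fix j assume j: "j \<in> {1..m}"
      then have jm: "j - 1 < m" and sj: "Suc (j - 1) = j" by auto
      have "c ! (j-1) \<noteq> {}" "c ! (j-1) \<subseteq> A \<union> B" using comps_ne[OF c] comps_sub[OF c] nth_mem jm m_def by metis+
      then have "c ! (j-1) \<inter> A \<noteq> {} \<or> c ! (j-1) \<inter> B \<noteq> {}" by blast
      then show "j \<in> \<sigma> ` {1..k+l}"
      proof
        assume "c ! (j-1) \<inter> A \<noteq> {}"
        then have "j - 1 \<in> set JA" using setA jm by simp
        then obtain t where t: "t < k" "JA ! t = j - 1" unfolding k_def by (metis in_set_conv_nth)
        then have "\<sigma> (Suc t) = j" using s1[of "Suc t"] sj by simp
        moreover have "Suc t \<in> {1..k+l}" using t by simp
        ultimately show ?thesis by (metis imageI)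
      next
        assume "c ! (j-1) \<inter> B \<noteq> {}"
        then have "j - 1 \<in> set JB" using setB jm by simp
        then obtain t where t: "t < l" "JB ! t = j - 1" unfolding l_def by (metis in_set_conv_nth)
        then have "\<sigma> (k + Suc t) = j" using s2[of "k + Suc t"] sj by simp
        moreover have "k + Suc t \<in> {1..k+l}" using t by simp
        ultimately show ?thesis by (metis imageI)
      qed
    qed
  qed
  have sm1: "strict_mono_on {1..k} \<sigma>" unfolding strict_mono_on_def
  proof (intro allI impI)
    fix a b assume ab: "a \<in> {1..k} \<and> b \<in> {1..k} \<and> a < b"
    then have "JA ! (a-1) < JA ! (b-1)" using sorted_wrt_nth_less[OF sA, of "a-1" "b-1"] k_def by auto
    then show "\<sigma> a < \<sigma> b" using s1 ab by simp
  qed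
  have sm2: "strict_mono_on {k+1..k+l} \<sigma>" unfolding strict_mono_on_def
  proof (intro allI impI)
    fix a b assume ab: "a \<in> {k+1..k+l} \<and> b \<in> {k+1..k+l} \<and> a < b"
    then have "JB ! (a-k-1) < JB ! (b-k-1)" using sorted_wrt_nth_less[OF sB, of "a-k-1" "b-k-1"] l_def by auto
    then show "\<sigma> a < \<sigma> b" using s2 ab by simp
  qed
  have z: "\<forall>i. i \<notin> {1..k+l} \<longrightarrow> \<sigma> i = 0" by (simp add: \<sigma>_def)
  have \<sigma>Q: "\<sigma> \<in> QSh k l" unfolding QSh_def using z img sm1 sm2 by blast
  have qm: "qsh_max (length (proj A c) + length (proj B c)) \<sigma> = m"
    unfolding lk qsh_max_def img by (rule max_upto)
  define w where "w = proj A c @ proj B c"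
  have wA: "w ! (i-1) = c ! (JA ! (i-1)) \<inter> A" if "i \<in> {1..k}" for i
    using that unfolding w_def pA k_def by (auto simp: nth_append)
  have wB: "w ! (i-1) = c ! (JB ! (i-k-1)) \<inter> B" if "i \<in> {k+1..k+l}" for i
  proof -
    have "\<not> i - 1 < k" "i - 1 - k = i - k - 1" "i - k - 1 < l" using that by auto
    then show ?thesis unfolding w_def pA pB k_def l_def by (simp add: nth_append)
  qed
  have "qsh_result (proj A c) (proj B c) \<sigma> = c"
  proof (rule nth_equalityI)
    show "length (qsh_result (proj A c) (proj B c) \<sigma>) = length c" using qsh_result_nth(1)[OF qm] m_def by simp
    fix j assume "j < length (qsh_result (proj A c) (proj B c) \<sigma>)"
    then have j: "j < m" using qsh_result_nth(1)[OF qm] by simp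
    have r: "qsh_result (proj A c) (proj B c) \<sigma> ! j = \<Union>{w!(i-1) | i. i \<in> {1..k+l} \<and> \<sigma> i = Suc j}"
      using qsh_result_nth(2)[OF qm j] unfolding w_def lk .
    show "qsh_result (proj A c) (proj B c) \<sigma> ! j = c ! j"
      unfolding r
    proof (rule set_eqI)
      fix x
      show "x \<in> \<Union>{w!(i-1) | i. i \<in> {1..k+l} \<and> \<sigma> i = Suc j} \<longleftrightarrow> x \<in> c ! j"
        unfolding mem_UN_compr
      proof
        assume "\<exists>i. (i \<in> {1..k+l} \<and> \<sigma> i = Suc j) \<and> x \<in> w ! (i-1)"
        then obtain i where i: "i \<in> {1..k+l}" "\<sigma> i = Suc j" "x \<in> w ! (i-1)" by blast
        show "x \<in> c ! j"
        proof (cases "i \<le> k")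
          case True
          then have ii: "i \<in> {1..k}" using i by auto
          then have "JA ! (i-1) = j" using s1 i(2) by simp
          then show ?thesis using wA[OF ii] i(3) by simp
        next
          case False
          then have ii: "i \<in> {k+1..k+l}" using i by auto
          then have "JB ! (i-k-1) = j" using s2 i(2) by simp
          then show ?thesis using wB[OF ii] i(3) by simp
        qed
      next
        assume x: "x \<in> c ! j"
        have "c ! j \<subseteq> A \<union> B" using comps_sub[OF c] nth_mem j m_def by metis
        then have "x \<in> A \<or> x \<in> B" using x by blast
        then show "\<exists>i. (i \<in> {1..k+l} \<and> \<sigma> i = Suc j) \<and> x \<in> w ! (i-1)"
        proof
          assume xa: "x \<in> A"
          then have "j \<in> set JA" using setA j x by blast
          then obtain t where t: "t < k" "JA ! t = j" unfolding k_def by (metis in_set_conv_nth)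
          have ii: "Suc t \<in> {1..k}" using t by simp
          have "\<sigma> (Suc t) = Suc j" using s1[OF ii] t by simp
          moreover have "x \<in> w ! (Suc t - 1)" using wA[OF ii] t x xa by simp
          moreover have "Suc t \<in> {1..k+l}" using t by simp
          ultimately show ?thesis by blast
        next
          assume xb: "x \<in> B"
          then have "j \<in> set JB" using setB j x by blast
          then obtain t where t: "t < l" "JB ! t = j" unfolding l_def by (metis in_set_conv_nth)
          have ii: "k + Suc t \<in> {k+1..k+l}" using t by simp
          have "\<sigma> (k + Suc t) = Suc j" using s2[OF ii] t by simp
          moreover have "x \<in> w ! (k + Suc t - 1)" using wB[OF ii] t x xb by simp
          moreover have "k + Suc t \<in> {1..k+l}" using t by simp
          ultimately show ?thesis by blast
        qed
      qed
    qed
  qed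
  then show ?thesis using \<sigma>Q lk by auto
qed

lemma qsh_card:
  assumes c1: "c1 \<in> comps A" and c2: "c2 \<in> comps B" and AB: "A \<inter> B = {}"
  shows "card {\<sigma> \<in> QSh (length c1) (length c2). qsh_result c1 c2 \<sigma> = c} =
    (if c \<in> comps (A \<union> B) \<and> c1 = proj A c \<and> c2 = proj B c then 1 else 0)"
proof (cases "c \<in> comps (A \<union> B) \<and> c1 = proj A c \<and> c2 = proj B c")
  case True
  then obtain \<sigma>0 where s0: "\<sigma>0 \<in> QSh (length c1) (length c2)" "qsh_result c1 c2 \<sigma>0 = c"
    using qsh_exists[OF _ AB, of c] by auto
  have "{\<sigma> \<in> QSh (length c1) (length c2). qsh_result c1 c2 \<sigma> = c} = {\<sigma>0}"
  proof
    show "{\<sigma> \<in> QSh (length c1) (length c2). qsh_result c1 c2 \<sigma> = c} \<subseteq> {\<sigma>0}"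
    proof
      fix \<sigma> assume "\<sigma> \<in> {\<sigma> \<in> QSh (length c1) (length c2). qsh_result c1 c2 \<sigma> = c}"
      then have "\<sigma> \<in> QSh (length c1) (length c2)" "qsh_result c1 c2 \<sigma> = qsh_result c1 c2 \<sigma>0" using s0 by auto
      then show "\<sigma> \<in> {\<sigma>0}" using qsh_unique[OF c1 c2 AB] s0(1) by blast
    qed
    show "{\<sigma>0} \<subseteq> {\<sigma> \<in> QSh (length c1) (length c2). qsh_result c1 c2 \<sigma> = c}" using s0 by auto
  qed
  then show ?thesis using True by simp
next
  case False
  have "{\<sigma> \<in> QSh (length c1) (length c2). qsh_result c1 c2 \<sigma> = c} = {}"
  proof (rule ccontr)
    assume "{\<sigma> \<in> QSh (length c1) (length c2). qsh_result c1 c2 \<sigma> = c} \<noteq> {}"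
    then obtain \<sigma> where s: "\<sigma> \<in> QSh (length c1) (length c2)" "qsh_result c1 c2 \<sigma> = c" by blast
    have "c \<in> comps (A \<union> B) \<and> proj A c = c1 \<and> proj B c = c2" using qsh_R1[OF c1 c2 AB s(1)] unfolding s(2) .
    then show False using False by auto
  qed
  then show ?thesis unfolding if_not_P[OF False] by (metis card.empty)
qed

lemma CF_prod:
  assumes tc: "top_character lam" and fA: "finite A" and fB: "finite B" and AB: "A \<inter> B = {}"
    and qoA: "quasi_order A R" and qoB: "quasi_order B S"
  shows "CF lam (A \<union> B) (R \<union> S) = qsh_prod A B (CF lam A R) (CF lam B S)"
proof
  fix c
  define pa where "pa = proj A c"
  define pb where "pb = proj B c"
  define V where "V = (if c \<in> comps (A \<union> B) then CF lam A R pa * CF lam B S pb else 0)"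
  have "qsh_prod A B (CF lam A R) (CF lam B S) c =
    (\<Sum>c1\<in>comps A. \<Sum>c2\<in>comps B. if c2 = pb then (if c1 = pa then V else 0) else 0)"
    unfolding qsh_prod_def
  proof (intro sum.cong refl)
    fix c1 c2 assume c1: "c1 \<in> comps A" and c2: "c2 \<in> comps B"
    show "CF lam A R c1 * CF lam B S c2 * of_nat (card {\<sigma> \<in> QSh (length c1) (length c2). qsh_result c1 c2 \<sigma> = c}) =
      (if c2 = pb then (if c1 = pa then V else 0) else 0)"
      unfolding qsh_card[OF c1 c2 AB] V_def pa_def pb_def by auto
  qed
  also have "\<dots> = (\<Sum>c1\<in>comps A. if pb \<in> comps B then (if c1 = pa then V else 0) else 0)"
    using finite_comps[OF fB] by (simp add: sum.delta)
  also have "\<dots> = (if pb \<in> comps B then (if pa \<in> comps A then V else 0) else 0)"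
    using finite_comps[OF fA] by (simp add: sum.delta)
  also have "\<dots> = CF lam (A \<union> B) (R \<union> S) c"
  proof (cases "c \<in> comps (A \<union> B)")
    case True
    have "pa \<in> comps A" using proj_comps[OF True, of A] unfolding pa_def by (simp add: Int_absorb1)
    moreover have "pb \<in> comps B" using proj_comps[OF True, of B] unfolding pb_def by (simp add: Int_absorb1)
    ultimately show ?thesis using CF_proj[OF tc fA fB AB qoA qoB True] True unfolding V_def pa_def pb_def by simp
  next
    case False
    then show ?thesis unfolding V_def CF_def by simp
  qed
  finally show "CF lam (A \<union> B) (R \<union> S) c = qsh_prod A B (CF lam A R) (CF lam B S) c" by simp
qed

lemma qo_rel_image:
  assumes bij: "bij_betw \<sigma> A B" and qo: "quasi_order A R"
  shows "quasi_order B (rel_image \<sigma> R)"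
proof -
  have inj: "inj_on \<sigma> A" and BA: "\<sigma> ` A = B" using bij by (auto simp: bij_betw_def)
  have RA: "R \<subseteq> A \<times> A" and rf: "\<And>a. a \<in> A \<Longrightarrow> (a,a) \<in> R" and tr: "\<And>a b c. (a,b) \<in> R \<Longrightarrow> (b,c) \<in> R \<Longrightarrow> (a,c) \<in> R"
    using qo unfolding quasi_order_def refl_on_def trans_def by blast+
  have mem: "\<And>a b. a \<in> A \<Longrightarrow> b \<in> A \<Longrightarrow> ((\<sigma> a, \<sigma> b) \<in> rel_image \<sigma> R) = ((a,b) \<in> R)"
    using rel_image_mem[OF inj RA] by blast
  have ri: "p \<in> rel_image \<sigma> R \<Longrightarrow> \<exists>a b. p = (\<sigma> a, \<sigma> b) \<and> (a,b) \<in> R" for p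
    unfolding rel_image_def by auto
  have sub: "rel_image \<sigma> R \<subseteq> B \<times> B"
  proof
    fix p assume "p \<in> rel_image \<sigma> R"
    then obtain a b where "p = (\<sigma> a, \<sigma> b)" "(a,b) \<in> R" using ri by blast
    then show "p \<in> B \<times> B" using RA BA by auto
  qed
  have refl: "refl_on B (rel_image \<sigma> R)" unfolding refl_on_def
  proof (intro ballI)
    fix b assume "b \<in> B"
    then obtain a where a: "a \<in> A" "b = \<sigma> a" using BA by blast
    then show "(b, b) \<in> rel_image \<sigma> R" using mem[OF a(1) a(1)] rf[OF a(1)] by simp
  qed
  have trans: "trans (rel_image \<sigma> R)" unfolding trans_def
  proof (intro allI impI)
    fix x y z assume h: "(x, y) \<in> rel_image \<sigma> R" "(y, z) \<in> rel_image \<sigma> R"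
    obtain a b where ab: "(x,y) = (\<sigma> a, \<sigma> b)" "(a,b) \<in> R" using ri[OF h(1)] by blast
    obtain b' c where bc: "(y,z) = (\<sigma> b', \<sigma> c)" "(b',c) \<in> R" using ri[OF h(2)] by blast
    have "b \<in> A" "b' \<in> A" "a \<in> A" "c \<in> A" using ab bc RA by auto
    moreover have "\<sigma> b = \<sigma> b'" using ab bc by simp
    ultimately have "b = b'" using inj unfolding inj_on_def by blast
    then have "(a,c) \<in> R" using tr ab(2) bc(2) by blast
    then show "(x, z) \<in> rel_image \<sigma> R" using ab bc unfolding rel_image_def by auto
  qed
  show ?thesis unfolding quasi_order_def using sub refl trans by blast
qed

lemma qo_union:
  assumes qoA: "quasi_order A R" and qoB: "quasi_order B S" and AB: "A \<inter> B = {}"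
  shows "quasi_order (A \<union> B) (R \<union> S)"
proof -
  have RA: "R \<subseteq> A \<times> A" and rf: "refl_on A R" and tr: "trans R" using qoA unfolding quasi_order_def by blast+
  have SB: "S \<subseteq> B \<times> B" and sf: "refl_on B S" and ts: "trans S" using qoB unfolding quasi_order_def by blast+
  have "refl_on (A \<union> B) (R \<union> S)" using rf sf RA SB unfolding refl_on_def by blast
  moreover have "trans (R \<union> S)" unfolding trans_def
  proof (intro allI impI)
    fix x y z assume h: "(x,y) \<in> R \<union> S" "(y,z) \<in> R \<union> S"
    show "(x,z) \<in> R \<union> S"
    proof (cases "(x,y) \<in> R")
      case True
      then have "y \<in> A" using RA by blast
      then have "(y,z) \<in> R" using h(2) SB AB by blast
      then show ?thesis using True tr unfolding trans_def by blast
    next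
      case False
      then have xy: "(x,y) \<in> S" using h(1) by blast
      then have "y \<in> B" using SB by blast
      then have "(y,z) \<in> S" using h(2) RA AB by blast
      then show ?thesis using xy ts unfolding trans_def by blast
    qed
  qed
  moreover have "R \<union> S \<subseteq> (A \<union> B) \<times> (A \<union> B)" using RA SB by blast
  ultimately show ?thesis unfolding quasi_order_def by blast
qed

lemma qo_empty_rel: "quasi_order {} {}"
  by (simp add: quasi_order_def refl_on_def trans_def)

lemma morph_unique:
  assumes tc: "top_character lam" and phi: "top_comp_morphism \<phi>"
    and eps: "\<forall>A R. finite A \<longrightarrow> quasi_order A R \<longrightarrow> eps_comp A (\<phi> A R) = lam A R"
  shows "finite A \<Longrightarrow> quasi_order A R \<Longrightarrow> \<phi> A R c = CF lam A R c"
proof (induction c arbitrary: A R)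
  note M = phi[unfolded top_comp_morphism_def]
  have m0: "\<And>A R c. finite A \<Longrightarrow> quasi_order A R \<Longrightarrow> c \<notin> comps A \<Longrightarrow> \<phi> A R c = 0"
    using M[THEN conjunct1] by blast
  case Nil
  show ?case
  proof (cases "A = {}")
    case True
    then have "R = {}" using Nil.prems qo_empty by blast
    moreover have "\<phi> {} {} [] = 1" using M[THEN conjunct2, THEN conjunct2, THEN conjunct2, THEN conjunct2, THEN conjunct2] .
    moreover have "CF lam {} {} [] = 1" by (simp add: CF_def)
    ultimately show ?thesis using True by simp
  next
    case False
    then show ?thesis using m0[OF Nil.prems] by (simp add: CF_def)
  qed
next
  case (Cons X xs)
  note M = phi[unfolded top_comp_morphism_def]
  have m0: "\<And>A R c. finite A \<Longrightarrow> quasi_order A R \<Longrightarrow> c \<notin> comps A \<Longrightarrow> \<phi> A R c = 0"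
    using M[THEN conjunct1] by blast
  have cop: "\<forall>A B C R. finite A \<longrightarrow> quasi_order A R \<longrightarrow> B \<inter> C = {} \<longrightarrow> B \<union> C = A \<longrightarrow>
         (\<forall>c1\<in>comps B. \<forall>c2\<in>comps C.
            \<phi> A R (c1 @ c2) =
              (if is_open R C then \<phi> B (restr R B) c1 * \<phi> C (restr R C) c2 else 0))"
    using M[THEN conjunct2, THEN conjunct2, THEN conjunct2, THEN conjunct2, THEN conjunct1] .
  note fin = Cons.prems(1) and qo = Cons.prems(2)
  show ?case
  proof (cases "X # xs \<in> comps A")
    case False
    then show ?thesis using m0[OF fin qo False] by (simp add: CF_def)
  next
    case True
    then have X: "X \<noteq> {}" "X \<subseteq> A" and xs: "xs \<in> comps (A - X)" by (auto simp: comps_Cons)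
    have XX: "[X] \<in> comps X" using X by (simp add: comps_Cons)
    have d: "X \<inter> (A - X) = {}" "X \<union> (A - X) = A" using X by auto
    have fX: "finite X" and fAX: "finite (A - X)" using fin X finite_subset by auto
    have qX: "quasi_order X (restr R X)" and qAX: "quasi_order (A - X) (restr R (A - X))"
      using qo_restr[OF qo] X by auto
    have e1: "\<phi> A R ([X] @ xs) = (if is_open R (A - X) then \<phi> X (restr R X) [X] * \<phi> (A - X) (restr R (A - X)) xs else 0)"
      using cop fin qo d XX xs by blast
    have e2: "CF lam A R ([X] @ xs) = (if is_open R (A - X) then CF lam X (restr R X) [X] * CF lam (A - X) (restr R (A - X)) xs else 0)"
      by (rule CF_coprod[OF qo d XX xs])
    have s1: "\<phi> X (restr R X) [X] = lam X (restr R X)"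
      using eps_single[OF fX X(1), of "\<phi> X (restr R X)"] eps fX qX by simp
    have s2: "CF lam X (restr R X) [X] = lam X (restr R X)" by (rule CF_single[OF qX X(1)])
    have ih: "\<phi> (A - X) (restr R (A - X)) xs = CF lam (A - X) (restr R (A - X)) xs"
      by (rule Cons.IH[OF fAX qAX])
    show ?thesis using e1 e2 s1 s2 ih by simp
  qed
qed

theorem proposition40:
  fixes lam :: "'a set \<Rightarrow> ('a \<times> 'a) set \<Rightarrow> 'k::field"
  assumes "top_character lam"
  shows "top_comp_morphism (psi_formula lam) \<and>
         (\<forall>A R. finite A \<longrightarrow> quasi_order A R \<longrightarrow> eps_comp A (psi_formula lam A R) = lam A R) \<and>
         (\<forall>\<phi>. top_comp_morphism \<phi> \<and>
               (\<forall>A R. finite A \<longrightarrow> quasi_order A R \<longrightarrow> eps_comp A (\<phi> A R) = lam A R) \<longrightarrow>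
               (\<forall>A R. finite A \<longrightarrow> quasi_order A R \<longrightarrow> \<phi> A R = psi_formula lam A R))"
proof (intro conjI)
  note tc = assms
  show "top_comp_morphism (psi_formula lam)" unfolding top_comp_morphism_def
  proof (intro conjI allI impI ballI)
    fix A :: "'a set" and R and c assume h: "finite A" "quasi_order A R" "c \<notin> comps A"
    show "psi_formula lam A R c = 0" unfolding psi_CF[OF h(1,2)] CF_def using h(3) by simp
  next
    fix A B :: "'a set" and \<sigma> R c assume h: "finite A" "bij_betw \<sigma> A B" "quasi_order A R" "c \<in> comps A"
    have fB: "finite B" using h(1,2) bij_betw_finite by blast
    have qB: "quasi_order B (rel_image \<sigma> R)" by (rule qo_rel_image[OF h(2,3)])
    show "psi_formula lam B (rel_image \<sigma> R) (map ((`) \<sigma>) c) = psi_formula lam A R c"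
      unfolding psi_CF[OF fB qB] psi_CF[OF h(1,3)] by (rule CF_equiv[OF tc h])
  next
    show "psi_formula lam {} {} = (\<lambda>c. if c = [] then 1 else 0)"
      unfolding psi_CF[OF finite.emptyI qo_empty_rel] by (rule CF_empty)
  next
    fix A B :: "'a set" and R S assume h: "finite A" "finite B" "A \<inter> B = {}" "quasi_order A R" "quasi_order B S"
    have qU: "quasi_order (A \<union> B) (R \<union> S)" by (rule qo_union[OF h(4,5,3)])
    show "psi_formula lam (A \<union> B) (R \<union> S) = qsh_prod A B (psi_formula lam A R) (psi_formula lam B S)"
    proof -
      have fU: "finite (A \<union> B)" using h(1,2) by simp
      show ?thesis unfolding psi_CF[OF fU qU] psi_CF[OF h(1,4)] psi_CF[OF h(2,5)] by (rule CF_prod[OF tc h])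
    qed
  next
    fix A B C :: "'a set" and R c1 c2 assume h: "finite A" "quasi_order A R" "B \<inter> C = {}" "B \<union> C = A"
      and c1: "c1 \<in> comps B" and c2: "c2 \<in> comps C"
    have fB: "finite B" and fC: "finite C" using h(1,4) finite_subset by auto
    have qB: "quasi_order B (restr R B)" and qC: "quasi_order C (restr R C)" using qo_restr[OF h(2)] h(4) by auto
    show "psi_formula lam A R (c1 @ c2) =
       (if is_open R C then psi_formula lam B (restr R B) c1 * psi_formula lam C (restr R C) c2 else 0)"
      unfolding psi_CF[OF h(1,2)] psi_CF[OF fB qB] psi_CF[OF fC qC] by (rule CF_coprod[OF h(2-4) c1 c2])
  next
    show "psi_formula lam {} {} [] = 1"
      unfolding psi_CF[OF finite.emptyI qo_empty_rel] CF_empty by simp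
  qed
next
  show "\<forall>A R. finite A \<longrightarrow> quasi_order A R \<longrightarrow> eps_comp A (psi_formula lam A R) = lam A R"
  proof (intro allI impI)
    fix A :: "'a set" and R assume h: "finite A" "quasi_order A R"
    show "eps_comp A (psi_formula lam A R) = lam A R" unfolding psi_CF[OF h] by (rule CF_eps[OF assms h])
  qed
next
  show "\<forall>\<phi>. top_comp_morphism \<phi> \<and>
               (\<forall>A R. finite A \<longrightarrow> quasi_order A R \<longrightarrow> eps_comp A (\<phi> A R) = lam A R) \<longrightarrow>
               (\<forall>A R. finite A \<longrightarrow> quasi_order A R \<longrightarrow> \<phi> A R = psi_formula lam A R)"
  proof (intro allI impI)
    fix \<phi> and A :: "'a set" and R assume h: "top_comp_morphism \<phi> \<and> (\<forall>A R. finite A \<longrightarrow> quasi_order A R \<longrightarrow> eps_comp A (\<phi> A R) = lam A R)"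
      and fA: "finite A" and qA: "quasi_order A R"
    show "\<phi> A R = psi_formula lam A R"
    proof
      fix c show "\<phi> A R c = psi_formula lam A R c"
        unfolding psi_CF[OF fA qA] by (rule morph_unique[OF assms h[THEN conjunct1] h[THEN conjunct2] fA qA])
    qed
  qed
qed


end
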